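(* Assume conditions (C1)–(C5). Then for every $\zeta=\{\zeta_k\}_{k\in\mathbb Z}\in\Theta$ the impulsive system $(I_\zeta)$ has a unique solution $\phi_\zeta(s)=\{\phi^{ij}_\zeta(s)\}$ defined on all of $\mathbb R$ and satisfying $\sup_{s\in\mathbb R}\|\phi_\zeta(s)\|\le H_0$.
   Context: Fix integers $m,n\ge1$ and $r\ge0$. Cells are indexed by pairs $(i,j)$, $1\le i\le m$, $1\le j\le n$. The $r$-neighbourhood of $(i,j)$ is $N_r(i,j)=\{(h,l):1\le h\le m,\ 1\le l\le n,\ \max(|h-i|,|l-j|)\le r\}$. Fix constants $a_{ij}>0$, $C^{hl}_{ij}\ge0$, and a continuous function $f:\mathbb R\to\mathbb R$. Vectors of $\mathbb R^{mn}$ are written $v=\{v_{ij}\}$, with norm $\|v\|=\max_{(i,j)}|v_{ij}|$. Time scale: $\{\theta_k\}_{k\in\mathbb Z}$ is strictly increasing, $\theta_{-1}<0<\theta_0$, and there exist $\omega>0$ and $p\in\mathbb N$ with $\theta_{k+2p}=\theta_k+\omega$ for all $k$. Set $\mathbb T_0=\bigcup_{k\in\mathbb Z}[\theta_{2k-1},\theta_{2k}]$, $\delta_k=\theta_{2k+1}-\theta_{2k}$, $\eta_k=\theta_{2k}-\theta_{2k-1}$ (both $p$-periodic in $k$), $\delta=\max_{1\le k\le p}\delta_k$. On $\mathbb T_0'=\mathbb T_0\setminus\{\theta_{2k-1}:k\in\mathbb Z\}$ define $\psi(t)=t-\sum_{0<\theta_{2k}<t}\delta_k$ for $t\ge0$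 and $\psi(t)=t+\sum_{t\le\theta_{2k}<0}\delta_k$ for $t<0$; put $s_k=\psi(\theta_{2k})$, so $s_k-s_{k-1}=\eta_k$, and write $\psi(\omega):=\omega-\sum_{k=1}^p\delta_k=\sum_{k=1}^p\eta_k$, so $s_{k+p}=s_k+\psi(\omega)$. Inputs: $\Lambda\subset\mathbb R^{mn}$ is compact and $F:\Lambda\to\Lambda$ is continuous. $\Theta$ is the set of all sequences $\zeta=\{\zeta_k\}_{k\in\mathbb Z}$, $\zeta_k=\{\zeta^{ij}_k\}\in\Lambda$, with $\zeta_{k+1}=F(\zeta_k)$ for all $k\in\mathbb Z$. Impulsive system $(I_\zeta)$: for $s\in(s_{k-1},s_k)$, $y_{ij}'(s)=-a_{ij}y_{ij}(s)-\sum_{(h,l)\in N_r(i,j)}C^{hl}_{ij}f(y_{hl}(s))y_{ij}(s)+\zeta^{ij}_k$, and at $s=s_k$, $y_{ij}(s_k+)-y_{ij}(s_k)=-\delta_ka_{ij}y_{ij}(s_k)-\delta_k\sum_{(h,l)\in N_r(i,j)}C^{hl}_{ij}f(y_{hl}(s_k))y_{ij}(s_k)+\delta_k\zeta^{ij}_k$, where $y(s_k+)=\lim_{s\to s_k^+}y(s)$. Solutions are left-continuous, continuous except for discontinuities of the first kind at the points $s_k$. Let $u_{ij}(s,\tau)=e^{-a_{ij}(s-\tau)}\prod_{\nu=l}^{k}(1-\delta_\nu a_{ij})$ if $s_{l-1}<\tau\le s_l$, $s_k<s\le s_{k+1}$, $k\ge l$, and $u_{ij}(s,\tau)=e^{-a_{ij}(s-\tau)}$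 if $s_k<\tau\le s\le s_{k+1}$. Let $\lambda_{ij}=a_{ij}-\frac1{\psi(\omega)}\sum_{\nu=0}^{p-1}\ln|1-\delta_\nu a_{ij}|$, $\lambda=\min_{(i,j)}\lambda_{ij}$. Conditions: (C1) $\delta_ka_{ij}\ne1$ for all $i,j,k$; (C2) $\lambda>0$; (C3) $\sup_{s\in\mathbb R}|f(s)|\le M_f$ for some $M_f>0$; (C4) $|f(s_1)-f(s_2)|\le L_f|s_1-s_2|$ for all $s_1,s_2$, for some $L_f>0$. Under (C1),(C2) fix positive numbers $K_{ij}$ with $|u_{ij}(s,\tau)|\le K_{ij}e^{-\lambda_{ij}(s-\tau)}$ for $s\ge\tau$, and put $K=\max K_{ij}$. Define $\bar c=\max_{(i,j)}\big(\frac{K_{ij}}{\lambda_{ij}}+\frac{p\delta K_{ij}}{1-e^{-\lambda_{ij}\psi(\omega)}}\big)\sum_{(h,l)\in N_r(i,j)}C^{hl}_{ij}$, $M_F=\max_{\eta\in\Lambda}\|F(\eta)\|$, and (when $M_f\bar c<1$) $H_0=\frac{M_F}{1-M_f\bar c}\max_{(i,j)}\big(\frac{K_{ij}}{\lambda_{ij}}+\frac{p\delta K_{ij}}{1-e^{-\lambda_{ij}\psi(\omega)}}\big)$, $\bar d=(M_f+H_0L_f)\max_{(i,j)}K_{ij}\sum_{(h,l)\in N_r(i,j)}C^{hl}_{ij}$. (C5) $(M_f+H_0L_f)\bar c<1$ (this includes $M_f\bar c<1$). *)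

theory Defs
  imports "HOL-Analysis.Analysis"
begin

type_synonym cell = "nat \<times> nat"
type_synonym vec = "cell \<Rightarrow> real"

definition cells :: "nat \<Rightarrow> nat \<Rightarrow> cell set" where
  "cells m n = {1..m} \<times> {1..n}"

definition nbhd :: "nat \<Rightarrow> nat \<Rightarrow> nat \<Rightarrow> cell \<Rightarrow> cell set" where
  "nbhd m n r c = {d \<in> cells m n.
      max \<bar>int (fst d) - int (fst c)\<bar> \<bar>int (snd d) - int (snd c)\<bar> \<le> int r}"

definition vnorm :: "nat \<Rightarrow> nat \<Rightarrow> vec \<Rightarrow> real" where
  "vnorm m n v = Max ((\<lambda>c. \<bar>v c\<bar>) ` cells m n)"

definition del :: "(int \<Rightarrow> real) \<Rightarrow> int \<Rightarrow> real" where
  "del \<theta> k = \<theta> (2*k+1) - \<theta> (2*k)"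

definition eta :: "(int \<Rightarrow> real) \<Rightarrow> int \<Rightarrow> real" where
  "eta \<theta> k = \<theta> (2*k) - \<theta> (2*k-1)"

definition psi :: "(int \<Rightarrow> real) \<Rightarrow> real \<Rightarrow> real" where
  "psi \<theta> t = (if 0 \<le> t then t - (\<Sum>k\<in>{k. 0 < \<theta> (2*k) \<and> \<theta> (2*k) < t}. del \<theta> k)
              else t + (\<Sum>k\<in>{k. t \<le> \<theta> (2*k) \<and> \<theta> (2*k) < 0}. del \<theta> k))"

definition sk :: "(int \<Rightarrow> real) \<Rightarrow> int \<Rightarrow> real" where
  "sk \<theta> k = psi \<theta> (\<theta> (2*k))"

definition psi_om :: "(int \<Rightarrow> real) \<Rightarrow> nat \<Rightarrow> real" where
  "psi_om \<theta> p = (\<Sum>k\<in>{1..int p}. eta \<theta> k)"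

definition delta_max :: "(int \<Rightarrow> real) \<Rightarrow> nat \<Rightarrow> real" where
  "delta_max \<theta> p = Max (del \<theta> ` {1..int p})"

definition sidx :: "(int \<Rightarrow> real) \<Rightarrow> real \<Rightarrow> int" where
  "sidx \<theta> t = (THE k. sk \<theta> (k-1) < t \<and> t \<le> sk \<theta> k)"

text \<open>u_{ij}(s,tau) (for s >= tau): if s_{l-1} < tau <= s_l and s_k < s <= s_{k+1},
  then exp(-a(s-tau)) * prod_{nu=l}^{k} (1 - delta_nu a); empty product if k < l.\<close>
definition u :: "(int \<Rightarrow> real) \<Rightarrow> real \<Rightarrow> real \<Rightarrow> real \<Rightarrow> real" where
  "u \<theta> aij s \<tau> = exp (- aij * (s - \<tau>)) *
      (\<Prod>\<nu>\<in>{sidx \<theta> \<tau> .. sidx \<theta> s - 1}. 1 - del \<theta> \<nu> * aij)"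

definition lam :: "(int \<Rightarrow> real) \<Rightarrow> nat \<Rightarrow> real \<Rightarrow> real" where
  "lam \<theta> p aij = aij - (1 / psi_om \<theta> p) * (\<Sum>\<nu>\<in>{0..<int p}. ln \<bar>1 - del \<theta> \<nu> * aij\<bar>)"

definition coef :: "(int \<Rightarrow> real) \<Rightarrow> nat \<Rightarrow> (cell \<Rightarrow> real) \<Rightarrow> (cell \<Rightarrow> real) \<Rightarrow> cell \<Rightarrow> real" where
  "coef \<theta> p a K c = K c / lam \<theta> p (a c)
      + real p * delta_max \<theta> p * K c / (1 - exp (- lam \<theta> p (a c) * psi_om \<theta> p))"

definition cbar :: "nat \<Rightarrow> nat \<Rightarrow> nat \<Rightarrow> (int \<Rightarrow> real) \<Rightarrow> nat \<Rightarrow> (cell \<Rightarrow> real)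
    \<Rightarrow> (cell \<Rightarrow> cell \<Rightarrow> real) \<Rightarrow> (cell \<Rightarrow> real) \<Rightarrow> real" where
  "cbar m n r \<theta> p a C K =
     Max ((\<lambda>c. coef \<theta> p a K c * (\<Sum>d\<in>nbhd m n r c. C c d)) ` cells m n)"

definition MF :: "nat \<Rightarrow> nat \<Rightarrow> vec set \<Rightarrow> (vec \<Rightarrow> vec) \<Rightarrow> real" where
  "MF m n \<Lambda> F = Sup ((\<lambda>\<eta>. vnorm m n (F \<eta>)) ` \<Lambda>)"

definition H0 :: "nat \<Rightarrow> nat \<Rightarrow> nat \<Rightarrow> (int \<Rightarrow> real) \<Rightarrow> nat \<Rightarrow> (cell \<Rightarrow> real)
    \<Rightarrow> (cell \<Rightarrow> cell \<Rightarrow> real) \<Rightarrow> (cell \<Rightarrow> real) \<Rightarrow> real \<Rightarrow> vec set \<Rightarrow> (vec \<Rightarrow> vec) \<Rightarrow> real" where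
  "H0 m n r \<theta> p a C K Mf \<Lambda> F =
     MF m n \<Lambda> F / (1 - Mf * cbar m n r \<theta> p a C K) * Max (coef \<theta> p a K ` cells m n)"

definition Theta :: "vec set \<Rightarrow> (vec \<Rightarrow> vec) \<Rightarrow> (int \<Rightarrow> vec) set" where
  "Theta \<Lambda> F = {\<zeta>. (\<forall>k. \<zeta> k \<in> \<Lambda>) \<and> (\<forall>k. \<zeta> (k+1) = F (\<zeta> k))}"

definition rhs :: "nat \<Rightarrow> nat \<Rightarrow> nat \<Rightarrow> (cell \<Rightarrow> real) \<Rightarrow> (cell \<Rightarrow> cell \<Rightarrow> real)
    \<Rightarrow> (real \<Rightarrow> real) \<Rightarrow> vec \<Rightarrow> vec \<Rightarrow> cell \<Rightarrow> real" where
  "rhs m n r a C f y z c =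
     - a c * y c - (\<Sum>d\<in>nbhd m n r c. C c d * f (y d) * y c) + z c"

definition is_sol :: "nat \<Rightarrow> nat \<Rightarrow> nat \<Rightarrow> (int \<Rightarrow> real) \<Rightarrow> (cell \<Rightarrow> real)
    \<Rightarrow> (cell \<Rightarrow> cell \<Rightarrow> real) \<Rightarrow> (real \<Rightarrow> real) \<Rightarrow> (int \<Rightarrow> vec) \<Rightarrow> (real \<Rightarrow> vec) \<Rightarrow> bool" where
  "is_sol m n r \<theta> a C f \<zeta> y \<longleftrightarrow>
     (\<forall>k. \<forall>t\<in>{sk \<theta> (k-1)<..<sk \<theta> k}. \<forall>c\<in>cells m n.
         ((\<lambda>t. y t c) has_real_derivative rhs m n r a C f (y t) (\<zeta> k) c) (at t)) \<and>
     (\<forall>k. \<forall>c\<in>cells m n.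
         ((\<lambda>t. y t c) \<longlongrightarrow> y (sk \<theta> k) c) (at_left (sk \<theta> k)) \<and>
         ((\<lambda>t. y t c) \<longlongrightarrow> y (sk \<theta> k) c + del \<theta> k * rhs m n r a C f (y (sk \<theta> k)) (\<zeta> k) c)
            (at_right (sk \<theta> k)))"

end

theory Submission
  imports Defs
begin

locale ts =
  fixes \<theta> :: "int \<Rightarrow> real" and p :: nat and \<omega> :: real
  assumes mono: "strict_mono \<theta>" and neg1: "\<theta> (-1) < 0" and pos0: "0 < \<theta> 0"
    and om: "\<omega> > 0" and p1: "p \<ge> 1" and per: "\<forall>k. \<theta> (k + 2 * int p) = \<theta> k + \<omega>"
begin

abbreviation S where "S \<equiv> sk \<theta>"

lemma th_less: "\<theta> x < \<theta> y \<longleftrightarrow> x < y"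
  using mono by (simp add: strict_mono_less)
lemma th_le: "\<theta> x \<le> \<theta> y \<longleftrightarrow> x \<le> y"
  using mono by (simp add: strict_mono_less_eq)

lemma th2_pos: "0 < \<theta> (2*j) \<longleftrightarrow> 0 \<le> j"
proof
  assume "0 < \<theta> (2*j)"
  show "0 \<le> j"
  proof (rule ccontr)
    assume "\<not> 0 \<le> j" then have "2*j < -1" by linarith
    then have "\<theta> (2*j) < \<theta> (-1)" by (simp add: th_less)
    with neg1 \<open>0 < \<theta> (2*j)\<close> show False by linarith
  qed
next
  assume "0 \<le> j" then have "\<theta> 0 \<le> \<theta> (2*j)" by (simp add: th_le)
  with pos0 show "0 < \<theta> (2*j)" by linarith
qed

lemma del_pos: "del \<theta> k > 0"
  unfolding del_def by (simp add: th_less)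

lemma S_nonneg: assumes "0 \<le> k" shows "S k = \<theta> (2*k) - (\<Sum>j\<in>{0..<k}. del \<theta> j)"
proof -
  have t: "0 \<le> \<theta> (2*k)" using th2_pos[of k] assms by linarith
  have "{j. 0 < \<theta> (2*j) \<and> \<theta> (2*j) < \<theta> (2*k)} = {0..<k}"
    by (auto simp: th2_pos th_less)
  then show ?thesis using t by (simp add: sk_def psi_def)
qed

lemma th2_neg: "\<theta> (2*j) < 0 \<longleftrightarrow> j < 0"
proof
  assume "j < 0" then have "2*j < -1" by linarith
  then have "\<theta> (2*j) < \<theta> (-1)" by (simp only: th_less)
  with neg1 show "\<theta> (2*j) < 0" by linarith
next
  assume "\<theta> (2*j) < 0" then show "j < 0" using th2_pos[of j] by linarith
qed

lemma S_neg: assumes "k < 0" shows "S k = \<theta> (2*k) + (\<Sum>j\<in>{k..<0}. del \<theta> j)"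
proof -
  have t: "\<not> 0 \<le> \<theta> (2*k)" using th2_neg[of k] assms by linarith
  have "{j. \<theta> (2*k) \<le> \<theta> (2*j) \<and> \<theta> (2*j) < 0} = {k..<0}"
    by (auto simp: th_le th2_neg)
  then show ?thesis using t by (simp add: sk_def psi_def)
qed

lemma S_step: "S (k+1) = S k + (\<theta> (2*k+2) - \<theta> (2*k+1))"
proof (cases "0 \<le> k")
  case True
  have "{0..<k+1} = insert k {0..<k}" using True by auto
  then have "(\<Sum>j\<in>{0..<k+1}. del \<theta> j) = del \<theta> k + (\<Sum>j\<in>{0..<k}. del \<theta> j)" by simp
  then show ?thesis using True S_nonneg[of k] S_nonneg[of "k+1"] by (simp add: del_def algebra_simps)
next
  case False
  show ?thesis
  proof (cases "k = -1")
    case True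
    have "{-1..<0::int} = {-1}" by auto
    then show ?thesis using True S_nonneg[of 0] S_neg[of "-1"] by (simp add: del_def)
  next
    case False
    have "{k..<0} = insert k {k+1..<0}" using \<open>\<not> 0 \<le> k\<close> by auto
    then have "(\<Sum>j\<in>{k..<0}. del \<theta> j) = del \<theta> k + (\<Sum>j\<in>{k+1..<0}. del \<theta> j)" by simp
    then show ?thesis using False \<open>\<not> 0 \<le> k\<close> S_neg[of k] S_neg[of "k+1"] 
      by (simp add: del_def algebra_simps)
  qed
qed

lemma S_strict: "S (k-1) < S k"
  using S_step[of "k-1"] by (simp add: th_less)

lemma S_strict': "S k < S (k+1)"
  using S_strict[of "k+1"] by simp

lemma S_mono_lt: "j < k \<Longrightarrow> S j < S k"
proof -
  have "S j < S (j + 1 + int n)" for n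
  proof (induction n)
    case 0 then show ?case using S_strict' by simp
  next
    case (Suc n) 
    have e: "j + 1 + int (Suc n) = (j + 1 + int n) + 1" by simp
    show ?case unfolding e using Suc S_strict'[of "j + 1 + int n"] by linarith
  qed
  moreover assume "j < k"
  then have "k = j + 1 + int (nat (k - j - 1))" by simp
  ultimately show ?thesis by (metis (no_types))
qed

lemma S_less: "S j < S k \<longleftrightarrow> j < k"
  by (metis S_mono_lt linorder_neqE_linordered_idom order_less_asym order_less_irrefl)
lemma S_le: "S j \<le> S k \<longleftrightarrow> j \<le> k"
  by (meson S_less not_le)


lemma per2: "\<theta> (x + 2 * int p) = \<theta> x + \<omega>" using per by blast

lemma eta_per: "eta \<theta> (k + int p) = eta \<theta> k"
proof -
  have "\<theta> (2*(k + int p)) = \<theta> (2*k) + \<omega>" using per2[of "2*k"] by (simp add: algebra_simps)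
  moreover have "\<theta> (2*(k + int p) - 1) = \<theta> (2*k - 1) + \<omega>" using per2[of "2*k-1"] by (simp add: algebra_simps)
  ultimately show ?thesis by (simp add: eta_def)
qed

lemma del_per: "del \<theta> (k + int p) = del \<theta> k"
proof -
  have "\<theta> (2*(k + int p)) = \<theta> (2*k) + \<omega>" using per2[of "2*k"] by (simp add: algebra_simps)
  moreover have "\<theta> (2*(k + int p) + 1) = \<theta> (2*k + 1) + \<omega>" using per2[of "2*k+1"] by (simp add: algebra_simps)
  ultimately show ?thesis by (simp add: del_def)
qed

lemma window_const:
  fixes g :: "int \<Rightarrow> real"
  assumes gp: "\<And>k. g (k + int p) = g k"
  shows "(\<Sum>i<p. g (k + int i)) = (\<Sum>i<p. g (int i))"
proof -
  define W where "W k = (\<Sum>i<p. g (k + int i))" for k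
  have step: "W (k+1) = W k" for k
  proof -
    have "(\<Sum>i<Suc p. g (k + int i)) = g (k + int 0) + (\<Sum>i<p. g (k + int (Suc i)))"
      by (rule sum.lessThan_Suc_shift)
    moreover have "(\<Sum>i<Suc p. g (k + int i)) = (\<Sum>i<p. g (k + int i)) + g (k + int p)" by simp
    ultimately have "(\<Sum>i<p. g (k + int (Suc i))) = W k" using gp[of k] unfolding W_def by simp
    then show ?thesis unfolding W_def by (simp add: algebra_simps)
  qed
  have "W k = W 0"
  proof (induction k rule: int_induct[where k=0])
    case base then show ?case by simp
  next
    case (step1 i) then show ?case using step[of i] by simp
  next
    case (step2 i) then show ?case using step[of "i-1"] by simp
  qed
  then show ?thesis unfolding W_def by simp
qed

abbreviation P where "P \<equiv> psi_om \<theta> p"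

lemma S_step': "S (k+1) = S k + eta \<theta> (k+1)"
  using S_step[of k] by (simp add: eta_def algebra_simps)

lemma S_shift: "S (k + int n) = S k + (\<Sum>i<n. eta \<theta> (k + 1 + int i))"
proof (induction n)
  case 0 then show ?case by simp
next
  case (Suc n)
  have "S (k + int (Suc n)) = S ((k + int n) + 1)" by (simp add: algebra_simps)
  also have "\<dots> = S (k + int n) + eta \<theta> (k + int n + 1)" by (rule S_step')
  finally show ?case using Suc by (simp add: algebra_simps)
qed

lemma P_sum: "P = (\<Sum>i<p. eta \<theta> (1 + int i))"
proof -
  have "{1..int p} = (\<lambda>i. 1 + int i) ` {..<p}"
  proof
    show "{1..int p} \<subseteq> (\<lambda>i. 1 + int i) ` {..<p}"
    proof
      fix x :: int assume "x \<in> {1..int p}"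
      then have "x = 1 + int (nat (x - 1))" "nat (x - 1) < p" by auto
      then show "x \<in> (\<lambda>i. 1 + int i) ` {..<p}" by blast
    qed
  qed auto
  moreover have "inj_on (\<lambda>i. 1 + int i) {..<p}" by (auto simp: inj_on_def)
  ultimately show ?thesis unfolding psi_om_def by (simp add: sum.reindex)
qed

lemma S_per: "S (k + int p) = S k + P"
proof -
  have "(\<Sum>i<p. eta \<theta> ((k + 1) + int i)) = (\<Sum>i<p. eta \<theta> (int i))"
    by (rule window_const) (rule eta_per)
  moreover have "(\<Sum>i<p. eta \<theta> (1 + int i)) = (\<Sum>i<p. eta \<theta> (int i))"
    by (rule window_const) (rule eta_per)
  ultimately show ?thesis using S_shift[of k p] P_sum by (simp add: algebra_simps)
qed

lemma P_pos: "P > 0"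
proof -
  have "S 0 < S (0 + int p)" using p1 by (simp add: S_less)
  then show ?thesis using S_per[of 0] by simp
qed

lemma S_per_n: "S (k + int p * int n) = S k + real n * P"
proof (induction n)
  case 0 then show ?case by simp
next
  case (Suc n)
  have "S (k + int p * int (Suc n)) = S ((k + int p * int n) + int p)" by (simp add: algebra_simps)
  also have "\<dots> = S (k + int p * int n) + P" by (rule S_per)
  finally show ?case using Suc by (simp add: algebra_simps)
qed

lemma S_gap: "S k - S (k - int i) \<ge> real (i div p) * P"
proof -
  have "S ((k - int p * int (i div p)) + int p * int (i div p)) = S (k - int p * int (i div p)) + real (i div p) * P"
    by (rule S_per_n)
  then have e: "S k = S (k - int p * int (i div p)) + real (i div p) * P" by simp
  have "int p * int (i div p) \<le> int i"
  proof -
    have "p * (i div p) \<le> i" by (rule times_div_less_eq_dividend)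
    then show ?thesis by (metis of_nat_le_iff of_nat_mult)
  qed
  then have "S (k - int i) \<le> S (k - int p * int (i div p))" by (simp add: S_le)
  then show ?thesis using e by linarith
qed

lemma S_unb_above: "\<exists>k. t \<le> S k"
proof -
  obtain n :: nat where "real n > (t - S 0) / P" using reals_Archimedean2 by blast
  then have "real n * P > t - S 0" using P_pos by (simp add: field_simps)
  then show ?thesis using S_per_n[of 0 n] by (intro exI[of _ "0 + int p * int n"]) linarith
qed

lemma S_unb_below: "\<exists>k. S k < t"
proof -
  obtain n :: nat where "real n > (S 0 - t) / P" using reals_Archimedean2 by blast
  then have "real n * P > S 0 - t" using P_pos by (simp add: field_simps)
  then show ?thesis using S_per_n[of "- int p * int n" n] by (intro exI[of _ "- int p * int n"]) simp
qed

lemma sidx_eq: assumes "S (k-1) < t" "t \<le> S k" shows "sidx \<theta> t = k"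
proof -
  have "j = k" if "S (j-1) < t" "t \<le> S j" for j
  proof (rule ccontr)
    assume "j \<noteq> k"
    then have "j < k \<or> k < j" by linarith
    then show False
    proof
      assume "j < k" then have "j \<le> k - 1" by linarith
      then have "S j \<le> S (k-1)" by (simp add: S_le)
      with that assms show False by linarith
    next
      assume "k < j" then have "k \<le> j - 1" by linarith
      then have "S k \<le> S (j-1)" by (simp add: S_le)
      with that assms show False by linarith
    qed
  qed
  then show ?thesis unfolding sidx_def using assms by (intro the_equality) blast+
qed

lemma sidx_ex: "\<exists>k. S (k-1) < t \<and> t \<le> S k"
proof -
  obtain j where j: "S j < t" using S_unb_below by blast
  obtain k0 where k0: "t \<le> S k0" using S_unb_above by blast
  have "j < k0"
  proof (rule ccontr)
    assume "\<not> j < k0" then have "S k0 \<le> S j" by (simp add: S_le)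
    with j k0 show False by linarith
  qed
  define n where "n = (LEAST n. t \<le> S (j + int n))"
  have ex: "t \<le> S (j + int (nat (k0 - j)))" using k0 \<open>j < k0\<close> by simp
  have n1: "t \<le> S (j + int n)" unfolding n_def by (rule LeastI[where P="\<lambda>n. t \<le> S (j + int n)", OF ex])
  have "n \<noteq> 0" proof assume "n = 0" with n1 j show False by simp qed
  then obtain m where m: "n = Suc m" by (cases n) auto
  have "\<not> t \<le> S (j + int m)"
  proof
    assume "t \<le> S (j + int m)"
    then have "n \<le> m" unfolding n_def by (rule Least_le)
    then show False using m by simp
  qed
  then show ?thesis using n1 m by (intro exI[of _ "j + int n"]) (simp add: algebra_simps)
qed

lemma sidx: "S (sidx \<theta> t - 1) < t" "t \<le> S (sidx \<theta> t)"
  using sidx_ex[of t] sidx_eq by auto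

lemma sidx_S: "sidx \<theta> (S k) = k"
  by (rule sidx_eq) (auto simp: S_strict)

lemma sidx_mono: assumes "t \<le> t'" shows "sidx \<theta> t \<le> sidx \<theta> t'"
proof (rule ccontr)
  assume "\<not> ?thesis"
  then have "sidx \<theta> t' \<le> sidx \<theta> t - 1" by linarith
  then have "S (sidx \<theta> t') \<le> S (sidx \<theta> t - 1)" by (simp add: S_le)
  with sidx[of t] sidx[of t'] assms show False by linarith
qed

lemma del_le_dm: "del \<theta> k \<le> delta_max \<theta> p"
proof -
  define k' where "k' = 1 + (k - 1) mod int p"
  have pp: "int p > 0" using p1 by simp
  have "(k - 1) mod int p < int p" "0 \<le> (k - 1) mod int p" using pp by auto
  then have k'r: "k' \<in> {1..int p}" unfolding k'_def by auto
  have dn: "del \<theta> (j + int p * int n) = del \<theta> j" for j n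
  proof (induction n)
    case 0 then show ?case by simp
  next
    case (Suc n)
    have "del \<theta> (j + int p * int (Suc n)) = del \<theta> ((j + int p * int n) + int p)" by (simp add: algebra_simps)
    then show ?case using Suc del_per by simp
  qed
  have dz: "del \<theta> (j + int p * z) = del \<theta> j" for j z
  proof (cases "z \<ge> 0")
    case True then show ?thesis using dn[of j "nat z"] by simp
  next
    case False
    have "del \<theta> ((j + int p * z) + int p * int (nat (-z))) = del \<theta> (j + int p * z)" by (rule dn)
    then show ?thesis using False by (simp add: algebra_simps)
  qed
  have "k = k' + int p * ((k - 1) div int p)" unfolding k'_def
    by (metis add.commute add.left_commute diff_add_cancel mod_mult_div_eq mult.commute)
  then have "del \<theta> k = del \<theta> k'" using dz by metis
  moreover have "del \<theta> k' \<le> delta_max \<theta> p" unfolding delta_max_def using k'r by (intro Max_ge) auto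
  ultimately show ?thesis by simp
qed

lemma dm_pos: "delta_max \<theta> p > 0"
  using del_le_dm[of 0] del_pos[of 0] by linarith

end

lemma cont_le_left:
  fixes f g :: "real \<Rightarrow> real"
  assumes "\<alpha> < \<beta>" "continuous_on {\<alpha>..\<beta>} f" "continuous_on {\<alpha>..\<beta>} g"
    and le: "\<And>t. \<alpha> < t \<Longrightarrow> t \<le> \<beta> \<Longrightarrow> f t \<le> g t"
  shows "f \<alpha> \<le> g \<alpha>"
proof -
  have "(f \<longlongrightarrow> f \<alpha>) (at \<alpha> within {\<alpha>..\<beta>})" "(g \<longlongrightarrow> g \<alpha>) (at \<alpha> within {\<alpha>..\<beta>})"
    using assms(1-3) by (auto simp: continuous_on_def)
  then have lf: "(f \<longlongrightarrow> f \<alpha>) (at_right \<alpha>)" and lg: "(g \<longlongrightarrow> g \<alpha>) (at_right \<alpha>)"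
    using assms(1) by (auto simp: at_within_Icc_at_right)
  have ev: "eventually (\<lambda>t. f t \<le> g t) (at_right \<alpha>)"
    unfolding eventually_at_right_field using assms(1) le by (intro exI[of _ \<beta>]) auto
  show ?thesis by (rule tendsto_le[OF trivial_limit_at_right_real lg lf ev])
qed

lemma int_abs_bound:
  fixes f g :: "real \<Rightarrow> real"
  assumes "(f has_integral I) A" "(g has_integral J) A" "\<And>x. x \<in> A \<Longrightarrow> \<bar>f x\<bar> \<le> g x"
  shows "\<bar>I\<bar> \<le> J"
proof -
  have "I \<le> J" using has_integral_le[OF assms(1,2)] assms(3) by (meson abs_le_D1)
  moreover have "-I \<le> J" using has_integral_le[OF has_integral_neg[OF assms(1)] assms(2)] assms(3)
    by (meson abs_le_D2)
  ultimately show ?thesis by linarith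
qed

lemma exp_integral:
  fixes c :: real
  assumes "c > 0" "\<alpha> \<le> \<beta>"
  shows "((\<lambda>\<tau>. exp (-c*(s-\<tau>))) has_integral ((exp (-c*(s-\<beta>)) - exp (-c*(s-\<alpha>)))/c)) {\<alpha>..\<beta>}"
proof -
  have d: "((\<lambda>\<tau>. exp (-c*(s-\<tau>))/c) has_vector_derivative exp (-c*(s-x))) (at x within {\<alpha>..\<beta>})" for x
  proof -
    have "((\<lambda>\<tau>. exp (-c*(s-\<tau>))/c) has_real_derivative (exp (-c*(s-x)) * c)/c) (at x within {\<alpha>..\<beta>})"
      by (auto intro!: derivative_eq_intros)
    then show ?thesis using assms(1) by (simp add: has_real_derivative_iff_has_vector_derivative)
  qed
  have "((\<lambda>\<tau>. exp (-c*(s-\<tau>))) has_integral (exp (-c*(s-\<beta>))/c - exp (-c*(s-\<alpha>))/c)) {\<alpha>..\<beta>}"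
    by (rule fundamental_theorem_of_calculus[OF assms(2)]) (rule d)
  then show ?thesis by (simp add: diff_divide_distrib)
qed

context ts
begin

lemma u_same: "sidx \<theta> s = sidx \<theta> \<tau> \<Longrightarrow> u \<theta> a s \<tau> = exp (-a*(s-\<tau>))"
  unfolding u_def by simp

lemma u_cocycle:
  assumes "\<tau> \<le> \<sigma>" "\<sigma> \<le> s"
  shows "u \<theta> a s \<tau> = u \<theta> a s \<sigma> * u \<theta> a \<sigma> \<tau>"
proof -
  define A where "A = sidx \<theta> \<tau>"
  define B where "B = sidx \<theta> \<sigma>"
  define C where "C = sidx \<theta> s"
  have AB: "A \<le> B" "B \<le> C" unfolding A_def B_def C_def using assms sidx_mono by auto
  have "{A..C-1} = {A..B-1} \<union> {B..C-1}" using AB by auto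
  moreover have "{A..B-1} \<inter> {B..C-1} = {}" by auto
  ultimately have pr: "(\<Prod>\<nu>\<in>{A..C-1}. 1 - del \<theta> \<nu> * a) =
      (\<Prod>\<nu>\<in>{A..B-1}. 1 - del \<theta> \<nu> * a) * (\<Prod>\<nu>\<in>{B..C-1}. 1 - del \<theta> \<nu> * a)"
    by (simp add: prod.union_disjoint)
  have ex: "exp (- a * (s - \<tau>)) = exp (- a * (s - \<sigma>)) * exp (- a * (\<sigma> - \<tau>))"
    by (simp add: exp_add[symmetric] algebra_simps)
  show ?thesis unfolding u_def A_def[symmetric] B_def[symmetric] C_def[symmetric] pr ex
    by (simp add: algebra_simps)
qed

lemma u_step: "u \<theta> a (S k) (S (k-1)) = exp (-a*(S k - S (k-1))) * (1 - del \<theta> (k-1) * a)"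
proof -
  have "{k-1..k-1} = {k-1}" by auto
  then show ?thesis unfolding u_def sidx_S by simp
qed

lemma u_last: assumes "S (k-1) < s" "s \<le> S k"
  shows "u \<theta> a s (S (k-1)) = exp (-a*(s - S (k-1))) * (1 - del \<theta> (k-1) * a)"
proof -
  have "{k-1..k-1} = {k-1}" by auto
  then show ?thesis unfolding u_def sidx_S sidx_eq[OF assms] by simp
qed

definition pf :: "real \<Rightarrow> (real \<Rightarrow> real) \<Rightarrow> (real \<Rightarrow> real) \<Rightarrow> bool" where
  "pf a h y \<longleftrightarrow> (\<forall>k. \<forall>s\<in>{S (k-1)<..S k}.
     ((\<lambda>\<tau>. exp (-a*(s-\<tau>)) * h \<tau>) has_integral
       (y s - exp (-a*(s - S (k-1))) * (y (S (k-1)) + del \<theta> (k-1) * (-a * y (S (k-1)) + h (S (k-1))))))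
     {S (k-1)..s})"

lemma pf_diff: "pf a h1 y1 \<Longrightarrow> pf a h2 y2 \<Longrightarrow> pf a (\<lambda>t. h1 t - h2 t) (\<lambda>t. y1 t - y2 t)"
  unfolding pf_def
proof (intro allI ballI)
  fix k s assume A: "\<forall>k. \<forall>s\<in>{S (k - 1)<..S k}. ((\<lambda>\<tau>. exp (- a * (s - \<tau>)) * h1 \<tau>) has_integral
           (y1 s - exp (- a * (s - S (k - 1))) * (y1 (S (k - 1)) + del \<theta> (k - 1) * (- a * y1 (S (k - 1)) + h1 (S (k - 1)))))) {S (k - 1)..s}"
    and B: "\<forall>k. \<forall>s\<in>{S (k - 1)<..S k}. ((\<lambda>\<tau>. exp (- a * (s - \<tau>)) * h2 \<tau>) has_integral
           (y2 s - exp (- a * (s - S (k - 1))) * (y2 (S (k - 1)) + del \<theta> (k - 1) * (- a * y2 (S (k - 1)) + h2 (S (k - 1)))))) {S (k - 1)..s}"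
    and s: "s \<in> {S (k - 1)<..S k}"
  from has_integral_diff[OF A[rule_format, OF s] B[rule_format, OF s]]
  show "((\<lambda>\<tau>. exp (- a * (s - \<tau>)) * (h1 \<tau> - h2 \<tau>)) has_integral
     (y1 s - y2 s - exp (- a * (s - S (k - 1))) * (y1 (S (k - 1)) - y2 (S (k - 1)) + del \<theta> (k - 1) * (- a * (y1 (S (k - 1)) - y2 (S (k - 1))) + (h1 (S (k - 1)) - h2 (S (k - 1)))))))
     {S (k - 1)..s}"
    by (simp add: algebra_simps)
qed

end

locale lin = ts +
  fixes a K :: real
  assumes a_pos: "a > 0" and K_pos: "K > 0" and L_pos: "lam \<theta> p a > 0"
    and ub: "\<And>s \<tau>. \<tau> \<le> s \<Longrightarrow> \<bar>u \<theta> a s \<tau>\<bar> \<le> K * exp (- lam \<theta> p a * (s - \<tau>))"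
begin

abbreviation L where "L \<equiv> lam \<theta> p a"

lemma Gb:
  assumes "S i < s" "S (i-1) \<le> \<tau>" "\<tau> \<le> S i"
  shows "\<bar>u \<theta> a s (S i) * exp (-a*(S i - \<tau>))\<bar> \<le> K * exp (-L*(s-\<tau>))"
proof -
  have main: "\<bar>u \<theta> a s (S i) * exp (-a*(S i - t))\<bar> \<le> K * exp (-L*(s-t))" if "S (i-1) < t" "t \<le> S i" for t
  proof -
    have "sidx \<theta> t = i" using that by (rule sidx_eq)
    then have "u \<theta> a (S i) t = exp (-a*(S i - t))" using sidx_S by (intro u_same) auto
    moreover have "u \<theta> a s t = u \<theta> a s (S i) * u \<theta> a (S i) t" using that assms(1) by (intro u_cocycle) auto
    ultimately show ?thesis using ub[of t s] that assms(1) by simp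
  qed
  show ?thesis
  proof (cases "\<tau> = S (i-1)")
    case False then show ?thesis using main assms by simp
  next
    case True
    have "S (i-1) < S i" by (rule S_strict)
    then show ?thesis unfolding True
      apply (rule cont_le_left[where f="\<lambda>t. \<bar>u \<theta> a s (S i) * exp (-a*(S i - t))\<bar>" and g="\<lambda>t. K * exp (-L*(s-t))"])
      apply (auto intro!: continuous_intros)
      using main by simp
  qed
qed

lemma Gc:
  assumes "S (k-1) < s" "s \<le> S k" "S (k-1) \<le> \<tau>" "\<tau> \<le> s"
  shows "exp (-a*(s-\<tau>)) \<le> K * exp (-L*(s-\<tau>))"
proof -
  have main: "exp (-a*(s-t)) \<le> K * exp (-L*(s-t))" if "S (k-1) < t" "t \<le> s" for t
  proof -
    have "sidx \<theta> t = k" using that assms(2) by (intro sidx_eq) auto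
    moreover have "sidx \<theta> s = k" using assms(1,2) by (rule sidx_eq)
    ultimately have "u \<theta> a s t = exp (-a*(s-t))" by (intro u_same) auto
    then show ?thesis using ub[of t s] that by simp
  qed
  show ?thesis
  proof (cases "\<tau> = S (k-1)")
    case False then show ?thesis using main assms by simp
  next
    case True
    show ?thesis unfolding True
      apply (rule cont_le_left[where f="\<lambda>t. exp (-a*(s-t))" and g="\<lambda>t. K * exp (-L*(s-t))", OF assms(1)])
      apply (auto intro!: continuous_intros)
      using main by simp
  qed
qed

end

lemma geo_div:
  fixes r :: real
  assumes r: "0 \<le> r" "r < 1" and p: "p \<ge> 1"
  shows "(\<Sum>i\<le>n. r ^ (i div p)) \<le> real p / (1 - r)"
proof -
  have inner: "(\<Sum>i\<in>{m*p..<m*p+p}. r ^ (i div p)) = real p * r ^ m" for m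
  proof -
    have "(\<Sum>i\<in>{m*p..<m*p+p}. r ^ (i div p)) = (\<Sum>i\<in>{m*p..<m*p+p}. r ^ m)"
    proof (rule sum.cong)
      fix i assume "i \<in> {m*p..<m*p+p}"
      then have i1: "m*p \<le> i" "i < Suc m * p" by auto
      have "m*p div p \<le> i div p" using i1(1) by (rule div_le_mono)
      then have "m \<le> i div p" using p by simp
      moreover have "i div p < Suc m" using i1(2) by (rule less_mult_imp_div_less)
      ultimately have "i div p = m" by simp
      then show "r ^ (i div p) = r ^ m" by simp
    qed simp
    then show ?thesis by simp
  qed
  have "(\<Sum>i<Suc n * p. r ^ (i div p)) = (\<Sum>m<Suc n. \<Sum>i\<in>{m*p..<m*p+p}. r ^ (i div p))"
    by (rule sum.nat_group[symmetric])
  also have "\<dots> = real p * (\<Sum>m<Suc n. r ^ m)" using inner by (simp add: sum_distrib_left del: sum.lessThan_Suc)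
  also have "\<dots> = real p * ((1 - r ^ Suc n) / (1 - r))" using r by (simp add: sum_gp_strict del: sum.lessThan_Suc)
  also have "\<dots> \<le> real p * (1 / (1 - r))"
    using r by (intro mult_left_mono divide_right_mono) auto
  finally have a: "(\<Sum>i<Suc n * p. r ^ (i div p)) \<le> real p / (1 - r)" by simp
  have "{..n} \<subseteq> {..<Suc n * p}"
  proof
    fix i assume "i \<in> {..n}"
    then have "i < Suc n" by simp
    moreover have "Suc n * 1 \<le> Suc n * p" using p by (rule mult_le_mono2)
    ultimately show "i \<in> {..<Suc n * p}" by simp
  qed
  then have "(\<Sum>i\<le>n. r ^ (i div p)) \<le> (\<Sum>i<Suc n * p. r ^ (i div p))"
    using r by (intro sum_mono2) auto
  with a show ?thesis by linarith
qed

context lin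
begin

abbreviation dm where "dm \<equiv> delta_max \<theta> p"
abbreviation r where "r \<equiv> exp (- L * P)"

lemma r_lt1: "r < 1" and r_pos: "0 < r"
  using L_pos P_pos by auto

lemma exp_gap: assumes "S (k-1) < s"
  shows "exp (-L*(s - S (k-1-int i))) \<le> r ^ (i div p)"
proof -
  have "S (k-1) - S (k-1-int i) \<ge> real (i div p) * P" by (rule S_gap)
  then have "s - S (k-1-int i) \<ge> real (i div p) * P" using assms by linarith
  then have "L * (real (i div p) * P) \<le> L * (s - S (k-1-int i))"
    by (rule mult_left_mono) (use L_pos in auto)
  then have "-L*(s - S (k-1-int i)) \<le> real (i div p) * (-L*P)"
    by (simp add: algebra_simps)
  then have "exp (-L*(s - S (k-1-int i))) \<le> exp (real (i div p) * (-L*P))" by simp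
  also have "\<dots> = r ^ (i div p)" by (rule exp_of_nat_mult)
  finally show ?thesis .
qed

lemma main_bound:
  assumes pfy: "pf a h y" and hb: "\<And>t. \<bar>h t\<bar> \<le> B" and yb: "\<And>t. \<bar>y t\<bar> \<le> D"
  shows "\<bar>y s\<bar> \<le> (K / L + real p * dm * K / (1 - r)) * B"
proof -
  define k where "k = sidx \<theta> s"
  have sk1: "S (k-1) < s" "s \<le> S k" unfolding k_def using sidx by auto
  have B0: "0 \<le> B" using hb[of 0] by linarith
  have D0: "0 \<le> D" using yb[of 0] by linarith
  define e where "e n = exp (-L*(s - S (k-1-int n)))" for n
  define Sf where "Sf n = (\<Sum>i\<le>n. e i)" for n
  have claim: "\<exists>R. y s = u \<theta> a s (S (k-1-int n)) * y (S (k-1-int n)) + R \<and>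
      \<bar>R\<bar> \<le> K*B*dm*Sf n + K*B*(1 - e n)/L" for n
  proof (induction n)
    case 0
    define E where "E = exp (-a*(s - S (k-1)))"
    define yk where "yk = y (S (k-1))"
    define dl where "dl = del \<theta> (k-1)"
    have I0: "((\<lambda>\<tau>. exp (-a*(s-\<tau>)) * h \<tau>) has_integral
       (y s - E * (yk + dl * (-a * yk + h (S (k-1)))))) {S (k-1)..s}"
      using pfy sk1 unfolding pf_def E_def yk_def dl_def by auto
    have uk: "u \<theta> a s (S (k-1)) = E * (1 - dl * a)" unfolding E_def dl_def using sk1 by (rule u_last)
    have gi: "((\<lambda>\<tau>. K*B*exp (-L*(s-\<tau>))) has_integral K*B*((exp (-L*(s-s)) - exp (-L*(s-S (k-1))))/L)) {S (k-1)..s}"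
      using exp_integral[OF L_pos, of "S (k-1)" s s] sk1 by (intro has_integral_mult_right) auto
    have Ib: "\<bar>y s - E * (yk + dl * (-a * yk + h (S (k-1))))\<bar> \<le> K*B*((exp (-L*(s-s)) - exp (-L*(s-S (k-1))))/L)"
    proof (rule int_abs_bound[OF I0 gi])
      fix \<tau> assume "\<tau> \<in> {S (k-1)..s}"
      then have "exp (-a*(s-\<tau>)) \<le> K * exp (-L*(s-\<tau>))" using Gc[OF sk1] by auto
      then have "exp (-a*(s-\<tau>)) * \<bar>h \<tau>\<bar> \<le> (K * exp (-L*(s-\<tau>))) * B"
        using hb[of \<tau>] B0 K_pos by (intro mult_mono) auto
      then show "\<bar>exp (-a*(s-\<tau>)) * h \<tau>\<bar> \<le> K*B*exp (-L*(s-\<tau>))"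
        by (simp add: abs_mult algebra_simps)
    qed
    have Eb: "E \<le> K * exp (-L*(s - S (k-1)))" unfolding E_def using Gc[OF sk1] sk1 by auto
    have dlb: "0 < dl" "dl \<le> dm" unfolding dl_def using del_pos del_le_dm by auto
    have Hb: "\<bar>E * dl * h (S (k-1))\<bar> \<le> K*B*dm*e 0"
    proof -
      have "\<bar>E * dl * h (S (k-1))\<bar> = E * dl * \<bar>h (S (k-1))\<bar>" using dlb by (simp add: abs_mult E_def)
      also have "\<dots> \<le> K * exp (-L*(s - S (k-1))) * dm * B"
        using Eb dlb hb[of "S (k-1)"] B0 K_pos dm_pos by (intro mult_mono) (auto simp: E_def)
      also have "\<dots> = K*B*dm*e 0" by (simp add: e_def algebra_simps)
      finally show ?thesis .
    qed
    have Ib': "\<bar>y s - E * (yk + dl * (-a * yk + h (S (k-1))))\<bar> \<le> K*B*(1 - e 0)/L"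
      using Ib by (simp add: e_def)
    have S0: "Sf 0 = e 0" by (simp add: Sf_def)
    show ?case
    proof (intro exI conjI)
      show "y s = u \<theta> a s (S (k-1-int 0)) * y (S (k-1-int 0)) + (E * dl * h (S (k-1)) + (y s - E * (yk + dl * (-a * yk + h (S (k-1))))))"
        unfolding of_nat_0 diff_zero uk by (simp add: yk_def algebra_simps)
      show "\<bar>E * dl * h (S (k-1)) + (y s - E * (yk + dl * (-a * yk + h (S (k-1)))))\<bar> \<le> K*B*dm*Sf 0 + K*B*(1 - e 0)/L"
        using Hb[folded S0] Ib' abs_triangle_ineq[of "E * dl * h (S (k-1))" "y s - E * (yk + dl * (-a * yk + h (S (k-1))))"]
        by linarith
    qed
  next
    case (Suc n)
    define j where "j = k - 1 - int n"
    have jj: "k - 1 - int (Suc n) = j - 1" unfolding j_def by simp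
    from Suc obtain R where R: "y s = u \<theta> a s (S j) * y (S j) + R" "\<bar>R\<bar> \<le> K*B*dm*Sf n + K*B*(1 - e n)/L"
      unfolding j_def by blast
    have "S j \<le> S (k-1)" unfolding j_def by (simp add: S_le)
    then have Sjs: "S j < s" using sk1 by linarith
    define Ej where "Ej = exp (-a*(S j - S (j-1)))"
    define yj where "yj = y (S (j-1))"
    define dl where "dl = del \<theta> (j-1)"
    define U where "U = u \<theta> a s (S j)"
    have Ij: "((\<lambda>\<tau>. exp (-a*(S j-\<tau>)) * h \<tau>) has_integral
       (y (S j) - Ej * (yj + dl * (-a * yj + h (S (j-1)))))) {S (j-1)..S j}"
      using pfy S_strict[of j] unfolding pf_def Ej_def yj_def dl_def by auto
    have uj: "u \<theta> a s (S (j-1)) = U * (Ej * (1 - dl * a))"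
      unfolding U_def Ej_def dl_def
      using u_cocycle[of "S (j-1)" "S j" s a] S_strict[of j] Sjs u_step[of a j] by auto
    have UI: "((\<lambda>\<tau>. U * (exp (-a*(S j-\<tau>)) * h \<tau>)) has_integral
       U * (y (S j) - Ej * (yj + dl * (-a * yj + h (S (j-1)))))) {S (j-1)..S j}"
      by (rule has_integral_mult_right[OF Ij])
    have gi: "((\<lambda>\<tau>. K*B*exp (-L*(s-\<tau>))) has_integral K*B*((exp (-L*(s-S j)) - exp (-L*(s-S (j-1))))/L)) {S (j-1)..S j}"
      using exp_integral[OF L_pos, of "S (j-1)" "S j" s] S_strict[of j] by (intro has_integral_mult_right) auto
    have Ib: "\<bar>U * (y (S j) - Ej * (yj + dl * (-a * yj + h (S (j-1)))))\<bar> \<le> K*B*((exp (-L*(s-S j)) - exp (-L*(s-S (j-1))))/L)"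
    proof (rule int_abs_bound[OF UI gi])
      fix \<tau> assume "\<tau> \<in> {S (j-1)..S j}"
      then have g: "\<bar>U * exp (-a*(S j-\<tau>))\<bar> \<le> K * exp (-L*(s-\<tau>))" unfolding U_def using Gb[OF Sjs] by auto
      have "\<bar>U * (exp (-a*(S j-\<tau>)) * h \<tau>)\<bar> = \<bar>U * exp (-a*(S j-\<tau>))\<bar> * \<bar>h \<tau>\<bar>" by (simp add: abs_mult)
      also have "\<dots> \<le> K * exp (-L*(s-\<tau>)) * B" using g hb[of \<tau>] by (intro mult_mono) auto
      finally show "\<bar>U * (exp (-a*(S j-\<tau>)) * h \<tau>)\<bar> \<le> K*B*exp (-L*(s-\<tau>))" by (simp add: algebra_simps)
    qed
    have UEb: "\<bar>U * Ej\<bar> \<le> K * exp (-L*(s - S (j-1)))" unfolding U_def Ej_def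
      using Gb[OF Sjs, of "S (j-1)"] S_strict[of j] by auto
    have dlb: "0 < dl" "dl \<le> dm" unfolding dl_def using del_pos del_le_dm by auto
    have en: "e n = exp (-L*(s-S j))" "e (Suc n) = exp (-L*(s-S (j-1)))" unfolding e_def j_def by (simp_all add: algebra_simps)
    have Hb: "\<bar>U * Ej * dl * h (S (j-1))\<bar> \<le> K*B*dm*e (Suc n)"
    proof -
      have "\<bar>U * Ej * dl * h (S (j-1))\<bar> = \<bar>U * Ej\<bar> * dl * \<bar>h (S (j-1))\<bar>" using dlb by (simp add: abs_mult)
      also have "\<dots> \<le> K * exp (-L*(s - S (j-1))) * dm * B"
        using UEb dlb hb[of "S (j-1)"] B0 K_pos dm_pos by (intro mult_mono) auto
      also have "\<dots> = K*B*dm*e (Suc n)" unfolding en by (simp add: algebra_simps)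
      finally show ?thesis .
    qed
    have Ib': "\<bar>U * (y (S j) - Ej * (yj + dl * (-a * yj + h (S (j-1)))))\<bar> \<le> K*B*(e n - e (Suc n))/L"
      using Ib unfolding en by simp
    have ys: "y s = u \<theta> a s (S (j-1)) * yj + (R + U * Ej * dl * h (S (j-1)) + U * (y (S j) - Ej * (yj + dl * (-a * yj + h (S (j-1))))))"
      using R(1) unfolding uj U_def[symmetric] by (simp add: algebra_simps)
    have Sfs: "Sf (Suc n) = Sf n + e (Suc n)" unfolding Sf_def by simp
    show ?case unfolding jj
      apply (intro exI[of _ "R + U * Ej * dl * h (S (j-1)) + U * (y (S j) - Ej * (yj + dl * (-a * yj + h (S (j-1)))))"])
      apply (intro conjI)
       apply (simp add: ys yj_def)
    proof -
      have q: "K*B*(1 - e n)/L + K*B*(e n - e (Suc n))/L = K*B*(1 - e (Suc n))/L"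
        using L_pos by (simp add: field_simps)
      have q2: "K*B*dm*Sf (Suc n) = K*B*dm*Sf n + K*B*dm*e (Suc n)" unfolding Sfs by (simp add: algebra_simps)
      show "\<bar>R + U * Ej * dl * h (S (j-1)) + U * (y (S j) - Ej * (yj + dl * (-a * yj + h (S (j-1)))))\<bar>
        \<le> K*B*dm*Sf (Suc n) + K*B*(1 - e (Suc n))/L"
        using R(2) Hb Ib' q q2 abs_triangle_ineq[of "R + U * Ej * dl * h (S (j-1))" "U * (y (S j) - Ej * (yj + dl * (-a * yj + h (S (j-1)))))"]
          abs_triangle_ineq[of R "U * Ej * dl * h (S (j-1))"]
        by linarith
    qed
  qed
  define c where "c = (K / L + real p * dm * K / (1 - r)) * B"
  have bnd: "\<bar>y s\<bar> \<le> c + K * D * r ^ m" for m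
  proof -
    define n where "n = p * m"
    obtain R where R: "y s = u \<theta> a s (S (k-1-int n)) * y (S (k-1-int n)) + R" "\<bar>R\<bar> \<le> K*B*dm*Sf n + K*B*(1 - e n)/L"
      using claim by blast
    have nd: "n div p = m" unfolding n_def using p1 by simp
    have "S (k-1-int n) \<le> S (k-1)" by (simp add: S_le)
    then have ub1: "\<bar>u \<theta> a s (S (k-1-int n))\<bar> \<le> K * exp (-L*(s - S (k-1-int n)))"
      using sk1 by (intro ub) linarith
    have "exp (-L*(s - S (k-1-int n))) \<le> r ^ m" using exp_gap[OF sk1(1), of n] nd by simp
    then have "K * exp (-L*(s - S (k-1-int n))) \<le> K * r ^ m" using K_pos by simp
    then have "\<bar>u \<theta> a s (S (k-1-int n))\<bar> \<le> K * r ^ m" using ub1 by linarith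
    then have "\<bar>u \<theta> a s (S (k-1-int n))\<bar> * \<bar>y (S (k-1-int n))\<bar> \<le> (K * r ^ m) * D"
      using ub1 yb[of "S (k-1-int n)"] K_pos r_pos by (intro mult_mono) auto
    then have t1: "\<bar>u \<theta> a s (S (k-1-int n)) * y (S (k-1-int n))\<bar> \<le> K * D * r ^ m"
      by (simp add: abs_mult algebra_simps)
    have "Sf n \<le> (\<Sum>i\<le>n. r ^ (i div p))" unfolding Sf_def e_def using exp_gap[OF sk1(1)] by (intro sum_mono) auto
    also have "\<dots> \<le> real p / (1 - r)" using geo_div[of r p n] r_pos r_lt1 p1 by auto
    finally have "K*B*dm*Sf n \<le> K*B*dm*(real p / (1 - r))"
      using K_pos B0 dm_pos by (intro mult_left_mono) auto
    moreover have "K*B*(1 - e n)/L \<le> K*B/L"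
    proof -
      have "0 < e n" by (simp add: e_def)
      then have "K*B*(1 - e n) \<le> K*B*1" using K_pos B0 by (intro mult_left_mono) auto
      then show ?thesis using L_pos by (intro divide_right_mono) auto
    qed
    ultimately have "\<bar>R\<bar> \<le> c" using R(2) unfolding c_def by (simp add: algebra_simps)
    then show ?thesis using R(1) t1 abs_triangle_ineq[of "u \<theta> a s (S (k-1-int n)) * y (S (k-1-int n))" R] by linarith
  qed
  have lim: "(\<lambda>m. c + K * D * r ^ m) \<longlonglongrightarrow> c + K * D * 0"
    using r_pos r_lt1 by (intro tendsto_intros) auto
  have "\<bar>y s\<bar> \<le> c + K * D * 0"
    by (rule tendsto_le[OF trivial_limit_sequentially lim tendsto_const]) (use bnd in auto)
  then show ?thesis unfolding c_def by simp
qed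

end

lemma ev_ne_right: "eventually (\<lambda>t. t \<noteq> (\<alpha>::real)) (at_right \<alpha>)"
  unfolding eventually_at_right_field by (intro exI[of _ "\<alpha>+1"]) auto

lemma ev_ne_left: "\<alpha> < \<beta> \<Longrightarrow> eventually (\<lambda>t. t \<noteq> (\<alpha>::real)) (at_left \<beta>)"
  unfolding eventually_at_left_field by (intro exI[of _ \<alpha>]) auto

lemma ev_ne_at: "x \<noteq> \<alpha> \<Longrightarrow> eventually (\<lambda>t. t \<noteq> (\<alpha>::real)) (at x)"
proof -
  assume "x \<noteq> \<alpha>"
  then have "eventually (\<lambda>t. t \<in> - {\<alpha>}) (nhds x)" by (intro eventually_nhds_in_open) auto
  then show ?thesis unfolding eventually_at_filter by (auto elim: eventually_mono)
qed

lemma voc: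
  fixes y h :: "real \<Rightarrow> real"
  assumes ab: "\<alpha> < \<beta>"
    and der: "\<And>t. \<alpha> < t \<Longrightarrow> t < \<beta> \<Longrightarrow> (y has_real_derivative (-a * y t + h t)) (at t)"
    and lc: "(y \<longlongrightarrow> y \<beta>) (at_left \<beta>)"
    and rc: "(y \<longlongrightarrow> L0) (at_right \<alpha>)"
    and s: "\<alpha> < s" "s \<le> \<beta>"
  shows "((\<lambda>\<tau>. exp (-a*(s-\<tau>)) * h \<tau>) has_integral (y s - exp (-a*(s-\<alpha>)) * L0)) {\<alpha>..s}"
proof -
  define yh where "yh t = (if t = \<alpha> then L0 else y t)" for t
  have cont: "continuous_on {\<alpha>..\<beta>} yh"
    unfolding continuous_on_def
  proof
    fix x assume x: "x \<in> {\<alpha>..\<beta>}"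
    consider "x = \<alpha>" | "x = \<beta>" | "\<alpha> < x" "x < \<beta>" using x by fastforce
    then show "(yh \<longlongrightarrow> yh x) (at x within {\<alpha>..\<beta>})"
    proof cases
      case 1
      have "(yh \<longlongrightarrow> L0) (at_right \<alpha>)"
        using rc by (subst tendsto_cong[OF eventually_mono[OF ev_ne_right]]) (auto simp: yh_def)
      then show ?thesis using 1 ab by (simp add: at_within_Icc_at_right yh_def)
    next
      case 2
      have "(yh \<longlongrightarrow> y \<beta>) (at_left \<beta>)"
        using lc by (subst tendsto_cong[OF eventually_mono[OF ev_ne_left[OF ab]]]) (auto simp: yh_def)
      then show ?thesis using 2 ab by (simp add: at_within_Icc_at_left yh_def)
    next
      case 3
      have "isCont y x" using der[OF 3] by (rule DERIV_isCont)
      then have "(y \<longlongrightarrow> y x) (at x)" by (simp add: isCont_def)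
      then have "(yh \<longlongrightarrow> y x) (at x)"
        using 3 by (subst tendsto_cong[OF eventually_mono[OF ev_ne_at]]) (auto simp: yh_def)
      then show ?thesis using 3 by (simp add: at_within_Icc_at yh_def)
    qed
  qed
  define z where "z t = exp (a*t) * yh t" for t
  have zc: "continuous_on {\<alpha>..s} z" unfolding z_def
    by (intro continuous_intros continuous_on_subset[OF cont]) (use s in auto)
  have zd: "(z has_vector_derivative exp (a*t) * h t) (at t)" if t: "t \<in> {\<alpha><..<s}" for t
  proof -
    have t': "\<alpha> < t" "t < \<beta>" using t s by auto
    have "(yh has_real_derivative (-a * y t + h t)) (at t)"
      by (rule has_field_derivative_transform_within_open[OF der[OF t'], of "{\<alpha><..<\<beta>}"])
         (use t' in \<open>auto simp: yh_def\<close>)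
    then have "(z has_real_derivative (a * exp (a*t) * yh t + exp (a*t) * (-a * y t + h t))) (at t)"
      unfolding z_def by (auto intro!: derivative_eq_intros)
    moreover have "yh t = y t" using t' by (simp add: yh_def)
    ultimately show ?thesis by (simp add: has_real_derivative_iff_has_vector_derivative algebra_simps)
  qed
  have "((\<lambda>t. exp (a*t) * h t) has_integral (z s - z \<alpha>)) {\<alpha>..s}"
    by (rule fundamental_theorem_of_calculus_interior[OF _ zc zd]) (use s in auto)
  then have "((\<lambda>t. exp (-a * s) * (exp (a*t) * h t)) has_integral (exp (-a * s) * (z s - z \<alpha>))) {\<alpha>..s}"
    by (rule has_integral_mult_right)
  moreover have "(\<lambda>t. exp (-a * s) * (exp (a*t) * h t)) = (\<lambda>\<tau>. exp (-a*(s-\<tau>)) * h \<tau>)"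
  proof
    fix t
    have "exp (-a * s) * exp (a*t) = exp (-a*(s-t))" by (simp add: exp_add[symmetric] algebra_simps)
    then show "exp (-a * s) * (exp (a*t) * h t) = exp (-a*(s-t)) * h t" by (simp add: mult.assoc[symmetric])
  qed
  moreover have "exp (-a * s) * (z s - z \<alpha>) = y s - exp (-a*(s-\<alpha>)) * L0"
  proof -
    have "exp (-a * s) * exp (a * s) = 1" by (simp add: exp_add[symmetric])
    moreover have "exp (-a * s) * exp (a*\<alpha>) = exp (-a*(s-\<alpha>))" by (simp add: exp_add[symmetric] algebra_simps)
    ultimately show ?thesis using s unfolding z_def yh_def by (simp add: algebra_simps)
  qed
  ultimately show ?thesis by simp
qed

context ts
begin

lemma ode_pf:
  assumes der: "\<And>k t. S (k-1) < t \<Longrightarrow> t < S k \<Longrightarrow> (y has_real_derivative (-a * y t + h t)) (at t)"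
    and lc: "\<And>k. (y \<longlongrightarrow> y (S k)) (at_left (S k))"
    and rc: "\<And>k. (y \<longlongrightarrow> y (S k) + del \<theta> k * (-a * y (S k) + h (S k))) (at_right (S k))"
  shows "pf a h y"
  unfolding pf_def
proof (intro allI ballI)
  fix k s assume s: "s \<in> {S (k-1)<..S k}"
  show "((\<lambda>\<tau>. exp (-a*(s-\<tau>)) * h \<tau>) has_integral
       (y s - exp (-a*(s - S (k-1))) * (y (S (k-1)) + del \<theta> (k-1) * (-a * y (S (k-1)) + h (S (k-1))))))
     {S (k-1)..s}"
    by (rule voc[OF S_strict der lc rc]) (use s in auto)
qed

end

context ts
begin

definition PC :: "(real \<Rightarrow> real) \<Rightarrow> bool" where
  "PC g \<longleftrightarrow> (\<forall>k. \<exists>\<psi>. continuous_on {S (k-1)..S k} \<psi> \<and> (\<forall>t\<in>{S (k-1)<..S k}. \<psi> t = g t))"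

lemma PC_int:
  fixes c :: real
  assumes "PC h" "S (k-1) \<le> t" "t \<le> S k"
  shows "(\<lambda>\<tau>. exp (c * \<tau>) * h \<tau>) integrable_on {S (k-1)..t}"
proof -
  obtain \<psi> where \<psi>: "continuous_on {S (k-1)..S k} \<psi>" "\<And>t. t\<in>{S (k-1)<..S k} \<Longrightarrow> \<psi> t = h t"
    using assms(1) unfolding PC_def by blast
  have "continuous_on {S (k-1)..t} (\<lambda>\<tau>. exp (c * \<tau>) * \<psi> \<tau>)"
    by (intro continuous_intros continuous_on_subset[OF \<psi>(1)]) (use assms in auto)
  then have "(\<lambda>\<tau>. exp (c * \<tau>) * \<psi> \<tau>) integrable_on {S (k-1)..t}"
    by (rule integrable_continuous_real)
  then show ?thesis
    using integrable_spike_finite[of "{S (k-1)}" "{S (k-1)..t}" "\<lambda>\<tau>. exp (c * \<tau>) * h \<tau>" "\<lambda>\<tau>. exp (c * \<tau>) * \<psi> \<tau>"] \<psi>(2) assms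
    by auto
qed

lemma int_exp_bound:
  fixes c \<alpha> t B :: real and h :: "real \<Rightarrow> real"
  assumes "c > 0" "\<alpha> \<le> t" "(\<lambda>\<tau>. exp (c * \<tau>) * h \<tau>) integrable_on {\<alpha>..t}" "\<And>t. \<bar>h t\<bar> \<le> B"
  shows "\<bar>integral {\<alpha>..t} (\<lambda>\<tau>. exp (c * \<tau>) * h \<tau>)\<bar> \<le> B * ((exp (c * t) - exp (c * \<alpha>)) / c)"
proof -
  note g0 = exp_integral[OF assms(1,2), of 0]
  note g = has_integral_mult_right[OF g0, of B]
  have "\<bar>integral {\<alpha>..t} (\<lambda>\<tau>. exp (c * \<tau>) * h \<tau>)\<bar> \<le> B * ((exp (-c*(0-t)) - exp (-c*(0-\<alpha>)))/c)"
  proof (rule int_abs_bound[OF integrable_integral[OF assms(3)] g])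
    fix x assume "x \<in> {\<alpha>..t}"
    have "exp (c * x) * \<bar>h x\<bar> \<le> exp (c * x) * B" using assms(4)[of x] by (intro mult_left_mono) auto
    then show "\<bar>exp (c * x) * h x\<bar> \<le> B * exp (-c*(0-x))" by (simp add: abs_mult algebra_simps)
  qed
  then show ?thesis by simp
qed

end

context lin
begin

definition cc :: "(real \<Rightarrow> real) \<Rightarrow> int \<Rightarrow> real" where
  "cc h k = exp (-a*(S k - S (k-1))) * del \<theta> (k-1) * h (S (k-1))
      + exp (-a * S k) * integral {S (k-1)..S k} (\<lambda>\<tau>. exp (a * \<tau>) * h \<tau>)"

definition xs :: "(real \<Rightarrow> real) \<Rightarrow> int \<Rightarrow> real" where
  "xs h k = (\<Sum>i. u \<theta> a (S k) (S (k - int i)) * cc h (k - int i))"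

definition Yk :: "(real \<Rightarrow> real) \<Rightarrow> int \<Rightarrow> real \<Rightarrow> real" where
  "Yk h k t = exp (-a*(t - S (k-1))) * (xs h (k-1) + del \<theta> (k-1) * (-a * xs h (k-1) + h (S (k-1))))
      + exp (-a * t) * integral {S (k-1)..t} (\<lambda>\<tau>. exp (a * \<tau>) * h \<tau>)"

definition Lin :: "(real \<Rightarrow> real) \<Rightarrow> real \<Rightarrow> real" where
  "Lin h t = Yk h (sidx \<theta> t) t"

lemma cc_bound:
  assumes "PC h" "\<And>t. \<bar>h t\<bar> \<le> B"
  shows "\<bar>cc h k\<bar> \<le> dm * B + B / a"
proof -
  have B0: "0 \<le> B" using assms(2)[of 0] by linarith
  have i: "\<bar>integral {S (k-1)..S k} (\<lambda>\<tau>. exp (a * \<tau>) * h \<tau>)\<bar> \<le> B * ((exp (a * S k) - exp (a * S (k-1))) / a)"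
    by (rule int_exp_bound[OF a_pos _ PC_int[OF assms(1)] assms(2)]) (use S_strict[of k] in auto)
  have "\<bar>exp (-a * S k) * integral {S (k-1)..S k} (\<lambda>\<tau>. exp (a * \<tau>) * h \<tau>)\<bar>
      = exp (-a * S k) * \<bar>integral {S (k-1)..S k} (\<lambda>\<tau>. exp (a * \<tau>) * h \<tau>)\<bar>"
    by (simp add: abs_mult)
  also have "\<dots> \<le> exp (-a * S k) * (B * ((exp (a * S k) - exp (a * S (k-1))) / a))"
    by (rule mult_left_mono[OF i]) simp
  also have "\<dots> = B * ((1 - exp (-a * S k) * exp (a * S (k-1))) / a)"
    by (simp add: field_simps exp_minus)
  also have "\<dots> \<le> B * (1 / a)"
    using B0 a_pos by (intro mult_left_mono divide_right_mono) auto
  finally have t2: "\<bar>exp (-a * S k) * integral {S (k-1)..S k} (\<lambda>\<tau>. exp (a * \<tau>) * h \<tau>)\<bar> \<le> B / a" by simp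
  have "exp (-a*(S k - S (k-1))) \<le> 1" using a_pos S_strict[of k] by simp
  then have X: "exp (-a*(S k - S (k-1))) * del \<theta> (k-1) \<le> 1 * dm"
    using del_pos[of "k-1"] del_le_dm[of "k-1"] by (intro mult_mono) auto
  have "(exp (-a*(S k - S (k-1))) * del \<theta> (k-1)) * \<bar>h (S (k-1))\<bar> \<le> (1 * dm) * B"
    by (rule mult_mono[OF X]) (use assms(2)[of "S (k-1)"] B0 dm_pos in auto)
  then have "\<bar>exp (-a*(S k - S (k-1))) * del \<theta> (k-1) * h (S (k-1))\<bar> \<le> 1 * dm * B"
    using del_pos[of "k-1"] by (simp add: abs_mult)
  then show ?thesis using t2 unfolding cc_def
    by (smt (verit))
qed

lemma exp_gap': "exp (-L*(S k - S (k-int i))) \<le> r ^ (i div p)"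
proof -
  have "S k - S (k-int i) \<ge> real (i div p) * P" by (rule S_gap)
  then have "L * (real (i div p) * P) \<le> L * (S k - S (k-int i))"
    by (rule mult_left_mono) (use L_pos in auto)
  then have "-L*(S k - S (k-int i)) \<le> real (i div p) * (-L*P)"
    by (simp add: algebra_simps)
  then have "exp (-L*(S k - S (k-int i))) \<le> exp (real (i div p) * (-L*P))" by simp
  also have "\<dots> = r ^ (i div p)" by (rule exp_of_nat_mult)
  finally show ?thesis .
qed

lemma summ_r: "summable (\<lambda>i. r ^ (i div p))"
  by (rule bounded_imp_summable[where B="real p / (1 - r)"]) (use geo_div r_pos r_lt1 p1 in auto)

lemma suminf_r: "(\<Sum>i. r ^ (i div p)) \<le> real p / (1 - r)"
proof (rule suminf_le_const[OF summ_r])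
  fix n
  have "(\<Sum>i<n. r ^ (i div p)) \<le> (\<Sum>i\<le>n. r ^ (i div p))"
    using r_pos by (intro sum_mono2) auto
  also have "\<dots> \<le> real p / (1 - r)" using geo_div r_pos r_lt1 p1 by auto
  finally show "(\<Sum>i<n. r ^ (i div p)) \<le> real p / (1 - r)" .
qed

lemma xs_terms:
  assumes "PC h" "\<And>t. \<bar>h t\<bar> \<le> B"
  shows "\<bar>u \<theta> a (S k) (S (k - int i)) * cc h (k - int i)\<bar> \<le> K * (dm * B + B / a) * r ^ (i div p)"
proof -
  have "\<bar>u \<theta> a (S k) (S (k - int i))\<bar> \<le> K * exp (-L*(S k - S (k-int i)))"
    by (rule ub) (simp add: S_le)
  also have "\<dots> \<le> K * r ^ (i div p)" using exp_gap' K_pos by simp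
  finally have "\<bar>u \<theta> a (S k) (S (k - int i))\<bar> * \<bar>cc h (k - int i)\<bar> \<le> (K * r ^ (i div p)) * (dm * B + B / a)"
    using cc_bound[OF assms] K_pos r_pos by (intro mult_mono) auto
  then show ?thesis by (simp add: abs_mult algebra_simps)
qed

lemma xs_summable:
  assumes "PC h" "\<And>t. \<bar>h t\<bar> \<le> B"
  shows "summable (\<lambda>i. u \<theta> a (S k) (S (k - int i)) * cc h (k - int i))"
  by (rule summable_comparison_test'[OF summable_mult[OF summ_r]]) (use xs_terms[OF assms] in auto)

definition Xb where "Xb B = K * (dm * B + B / a) * (real p / (1 - r))"

lemma xs_bound:
  assumes "PC h" "\<And>t. \<bar>h t\<bar> \<le> B"
  shows "\<bar>xs h k\<bar> \<le> Xb B"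
proof -
  let ?f = "\<lambda>i. u \<theta> a (S k) (S (k - int i)) * cc h (k - int i)"
  let ?g = "\<lambda>i. K * (dm * B + B / a) * r ^ (i div p)"
  have sg: "summable ?g" by (rule summable_mult[OF summ_r])
  have sf: "summable ?f" by (rule xs_summable[OF assms])
  have "suminf ?f \<le> suminf ?g" using xs_terms[OF assms] sf sg by (intro suminf_le) (auto simp: abs_le_iff)
  moreover have "- suminf ?f \<le> suminf ?g"
  proof -
    have "suminf (\<lambda>i. - ?f i) \<le> suminf ?g" using xs_terms[OF assms] sf sg
      by (intro suminf_le summable_minus) (auto simp: abs_le_iff)
    then show ?thesis by (simp add: suminf_minus[OF sf])
  qed
  moreover have "suminf ?g \<le> Xb B"
  proof -
    have B0: "0 \<le> B" using assms(2)[of 0] by linarith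
    have "suminf ?g = K * (dm * B + B / a) * (\<Sum>i. r ^ (i div p))" by (rule suminf_mult[OF summ_r])
    also have "\<dots> \<le> K * (dm * B + B / a) * (real p / (1 - r))"
      using K_pos B0 dm_pos a_pos suminf_r by (intro mult_left_mono) auto
    finally show ?thesis unfolding Xb_def .
  qed
  ultimately show ?thesis unfolding xs_def by linarith
qed

lemma u_refl: "u \<theta> a t t = 1"
  by (simp add: u_same)

lemma xs_rec:
  assumes "PC h" "\<And>t. \<bar>h t\<bar> \<le> B"
  shows "xs h k = u \<theta> a (S k) (S (k-1)) * xs h (k-1) + cc h k"
proof -
  let ?f = "\<lambda>i. u \<theta> a (S k) (S (k - int i)) * cc h (k - int i)"
  have sf: "summable ?f" by (rule xs_summable[OF assms])
  have "(\<Sum>i. ?f (Suc i)) = suminf ?f - ?f 0" by (rule suminf_split_head[OF sf])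
  moreover have "?f 0 = cc h k" by (simp add: u_refl)
  moreover have "(\<Sum>i. ?f (Suc i)) = u \<theta> a (S k) (S (k-1)) * xs h (k-1)"
  proof -
    have "?f (Suc i) = u \<theta> a (S k) (S (k-1)) * (u \<theta> a (S (k-1)) (S (k - 1 - int i)) * cc h (k - 1 - int i))" for i
    proof -
      have e: "k - int (Suc i) = k - 1 - int i" by simp
      have "u \<theta> a (S k) (S (k - 1 - int i)) = u \<theta> a (S k) (S (k-1)) * u \<theta> a (S (k-1)) (S (k - 1 - int i))"
        by (rule u_cocycle) (simp_all add: S_le)
      then show ?thesis unfolding e by simp
    qed
    then have "(\<Sum>i. ?f (Suc i)) = (\<Sum>i. u \<theta> a (S k) (S (k-1)) * (u \<theta> a (S (k-1)) (S (k - 1 - int i)) * cc h (k - 1 - int i)))"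
      by simp
    also have "\<dots> = u \<theta> a (S k) (S (k-1)) * xs h (k-1)"
      unfolding xs_def by (rule suminf_mult[OF xs_summable[OF assms]])
    finally show ?thesis .
  qed
  ultimately show ?thesis unfolding xs_def by linarith
qed

lemma Yk_end:
  assumes "PC h" "\<And>t. \<bar>h t\<bar> \<le> B"
  shows "Yk h k (S k) = xs h k"
  using xs_rec[OF assms, of k] unfolding Yk_def cc_def u_step by (simp add: algebra_simps)

lemma Yk_start: "Yk h (k+1) (S k) = xs h k + del \<theta> k * (-a * xs h k + h (S k))"
  unfolding Yk_def by simp

lemma Lin_eq: "S (k-1) < t \<Longrightarrow> t \<le> S k \<Longrightarrow> Lin h t = Yk h k t"
  unfolding Lin_def using sidx_eq by simp

lemma Lin_S:
  assumes "PC h" "\<And>t. \<bar>h t\<bar> \<le> B"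
  shows "Lin h (S k) = xs h k"
  using Lin_eq[OF S_strict order_refl] Yk_end[OF assms] by simp

lemma Yk_cont:
  assumes "PC h"
  shows "continuous_on {S (k-1)..S k} (Yk h k)"
proof -
  have "continuous_on {S (k-1)..S k} (\<lambda>t. integral {S (k-1)..t} (\<lambda>\<tau>. exp (a * \<tau>) * h \<tau>))"
    by (rule indefinite_integral_continuous_1[OF PC_int[OF assms]]) (use S_strict[of k] in auto)
  then show ?thesis unfolding Yk_def by (intro continuous_intros) auto
qed

lemma Lin_PC:
  assumes "PC h"
  shows "PC (Lin h)"
  unfolding PC_def
proof
  fix k show "\<exists>\<psi>. continuous_on {S (k-1)..S k} \<psi> \<and> (\<forall>t\<in>{S (k-1)<..S k}. \<psi> t = Lin h t)"
    by (intro exI[of _ "Yk h k"]) (use Yk_cont[OF assms] Lin_eq in auto)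
qed

lemma Lin_pf:
  assumes "PC h" "\<And>t. \<bar>h t\<bar> \<le> B"
  shows "pf a h (Lin h)"
  unfolding pf_def
proof (intro allI ballI)
  fix k s assume s: "s \<in> {S (k-1)<..S k}"
  have "(\<lambda>\<tau>. exp (a * \<tau>) * h \<tau>) integrable_on {S (k-1)..s}" by (rule PC_int[OF assms(1)]) (use s in auto)
  then have "((\<lambda>\<tau>. exp (-a * s) * (exp (a * \<tau>) * h \<tau>)) has_integral exp (-a * s) * integral {S (k-1)..s} (\<lambda>\<tau>. exp (a * \<tau>) * h \<tau>)) {S (k-1)..s}"
    by (intro has_integral_mult_right integrable_integral)
  moreover have "(\<lambda>\<tau>. exp (-a * s) * (exp (a * \<tau>) * h \<tau>)) = (\<lambda>\<tau>. exp (-a*(s-\<tau>)) * h \<tau>)"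
  proof
    fix t
    have "exp (-a * s) * exp (a*t) = exp (-a*(s-t))" by (simp add: exp_add[symmetric] algebra_simps)
    then show "exp (-a * s) * (exp (a*t) * h t) = exp (-a*(s-t)) * h t" by (simp add: mult.assoc[symmetric])
  qed
  moreover have "Lin h s = Yk h k s" using s Lin_eq by auto
  moreover have "Lin h (S (k-1)) = xs h (k-1)" using Lin_S[OF assms] by simp
  ultimately show "((\<lambda>\<tau>. exp (-a*(s-\<tau>)) * h \<tau>) has_integral
       (Lin h s - exp (-a*(s - S (k-1))) * (Lin h (S (k-1)) + del \<theta> (k-1) * (-a * Lin h (S (k-1)) + h (S (k-1))))))
     {S (k-1)..s}"
    unfolding Yk_def by simp
qed

end

context lin
begin

lemma Ih_deriv:
  assumes "PC h" "S (k-1) < t" "t < S k"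
  shows "((\<lambda>t. integral {S (k-1)..t} (\<lambda>\<tau>. exp (a * \<tau>) * h \<tau>)) has_real_derivative exp (a * t) * h t) (at t)"
proof -
  obtain \<psi> where \<psi>: "continuous_on {S (k-1)..S k} \<psi>" "\<And>t. t\<in>{S (k-1)<..S k} \<Longrightarrow> \<psi> t = h t"
    using assms(1) unfolding PC_def by blast
  have c: "continuous_on {S (k-1)..S k} (\<lambda>\<tau>. exp (a * \<tau>) * \<psi> \<tau>)"
    by (intro continuous_intros \<psi>(1))
  have "((\<lambda>t. integral {S (k-1)..t} (\<lambda>\<tau>. exp (a * \<tau>) * \<psi> \<tau>)) has_vector_derivative exp (a * t) * \<psi> t) (at t within {S (k-1)..S k})"
    by (rule integral_has_vector_derivative[OF c]) (use assms in auto)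
  then have "((\<lambda>t. integral {S (k-1)..t} (\<lambda>\<tau>. exp (a * \<tau>) * \<psi> \<tau>)) has_vector_derivative exp (a * t) * \<psi> t) (at t within {S (k-1)<..<S k})"
    by (rule has_vector_derivative_within_subset) auto
  moreover have "at t within {S (k-1)<..<S k} = at t" by (rule at_within_open) (use assms in auto)
  moreover have "\<psi> t = h t" using assms \<psi>(2)[of t] by auto
  ultimately have d: "((\<lambda>t. integral {S (k-1)..t} (\<lambda>\<tau>. exp (a * \<tau>) * \<psi> \<tau>)) has_real_derivative exp (a * t) * h t) (at t)"
    by (simp only: has_real_derivative_iff_has_vector_derivative)
  have eq: "integral {S (k-1)..x} (\<lambda>\<tau>. exp (a * \<tau>) * \<psi> \<tau>) = integral {S (k-1)..x} (\<lambda>\<tau>. exp (a * \<tau>) * h \<tau>)"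
    if x: "x \<in> {S (k-1)<..<S k}" for x
  proof -
    have "continuous_on {S (k-1)..x} (\<lambda>\<tau>. exp (a * \<tau>) * \<psi> \<tau>)"
      by (rule continuous_on_subset[OF c]) (use x in auto)
    then have "((\<lambda>\<tau>. exp (a * \<tau>) * \<psi> \<tau>) has_integral integral {S (k-1)..x} (\<lambda>\<tau>. exp (a * \<tau>) * \<psi> \<tau>)) {S (k-1)..x}"
      by (intro integrable_integral integrable_continuous_real)
    then have "((\<lambda>\<tau>. exp (a * \<tau>) * h \<tau>) has_integral integral {S (k-1)..x} (\<lambda>\<tau>. exp (a * \<tau>) * \<psi> \<tau>)) {S (k-1)..x}"
      by (rule has_integral_spike_finite[of "{S (k-1)}", rotated 2]) (use \<psi>(2) x in auto)
    then show ?thesis by (rule integral_unique[symmetric])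
  qed
  show ?thesis
    by (rule has_field_derivative_transform_within_open[OF d, of "{S (k-1)<..<S k}"]) (use assms eq in auto)
qed

lemma Lin_deriv:
  assumes "PC h" "S (k-1) < t" "t < S k"
  shows "(Lin h has_real_derivative (-a * Lin h t + h t)) (at t)"
proof -
  define C0 where "C0 = xs h (k-1) + del \<theta> (k-1) * (-a * xs h (k-1) + h (S (k-1)))"
  define I where "I t = integral {S (k-1)..t} (\<lambda>\<tau>. exp (a * \<tau>) * h \<tau>)" for t
  have YI: "Yk h k x = exp (-a*(x - S (k-1))) * C0 + exp (-a * x) * I x" for x
    unfolding Yk_def C0_def I_def ..
  have dI: "(I has_real_derivative exp (a * t) * h t) (at t)" unfolding I_def by (rule Ih_deriv[OF assms])
  have D: "((\<lambda>x. exp (-a*(x - S (k-1))) * C0 + exp (-a * x) * I x) has_real_derivative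
      (exp (-a*(t - S (k-1))) * (-a) * C0 + (exp (-a * t) * (-a) * I t + exp (-a * t) * (exp (a * t) * h t)))) (at t)"
    by (auto intro!: derivative_eq_intros dI)
  have eq0: "exp (-a * t) * (exp (a * t) * h t) = h t"
    by (simp add: mult.assoc[symmetric] exp_add[symmetric])
  have fe: "Yk h k = (\<lambda>x. exp (-a*(x - S (k-1))) * C0 + exp (-a * x) * I x)" by (rule ext) (rule YI)
  have "(Yk h k has_real_derivative (-a * Yk h k t + h t)) (at t)"
    unfolding fe
    by (rule DERIV_cong[OF D[unfolded eq0]]) (simp add: algebra_simps)
  moreover have Le: "Lin h t = Yk h k t" using assms by (intro Lin_eq) auto
  ultimately have "(Yk h k has_real_derivative (-a * Lin h t + h t)) (at t)" by simp
  then show ?thesis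
    by (rule has_field_derivative_transform_within_open[of _ _ _ "{S (k-1)<..<S k}"])
       (use assms Lin_eq in auto)
qed

lemma Lin_lc:
  assumes "PC h" "\<And>t. \<bar>h t\<bar> \<le> B"
  shows "(Lin h \<longlongrightarrow> Lin h (S k)) (at_left (S k))"
proof -
  have "(Yk h k \<longlongrightarrow> Yk h k (S k)) (at (S k) within {S (k-1)..S k})"
    using Yk_cont[OF assms(1), of k] S_strict[of k] by (auto simp: continuous_on_def)
  then have "(Yk h k \<longlongrightarrow> Yk h k (S k)) (at_left (S k))"
    using S_strict[of k] by (simp add: at_within_Icc_at_left)
  moreover have "eventually (\<lambda>t. Yk h k t = Lin h t) (at_left (S k))"
    unfolding eventually_at_left_field using S_strict[of k] Lin_eq
    by (intro exI[of _ "S (k-1)"]) auto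
  ultimately have "(Lin h \<longlongrightarrow> Yk h k (S k)) (at_left (S k))"
    by (simp add: tendsto_cong)
  then show ?thesis using Lin_eq[OF S_strict order_refl] by simp
qed

lemma Lin_rc:
  assumes "PC h" "\<And>t. \<bar>h t\<bar> \<le> B"
  shows "(Lin h \<longlongrightarrow> Lin h (S k) + del \<theta> k * (-a * Lin h (S k) + h (S k))) (at_right (S k))"
proof -
  have ss: "S k < S (k+1)" using S_strict[of "k+1"] by simp
  have "(Yk h (k+1) \<longlongrightarrow> Yk h (k+1) (S k)) (at (S k) within {S k..S (k+1)})"
    using Yk_cont[OF assms(1), of "k+1"] ss by (auto simp: continuous_on_def)
  then have "(Yk h (k+1) \<longlongrightarrow> Yk h (k+1) (S k)) (at_right (S k))"
    using ss by (simp add: at_within_Icc_at_right)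
  moreover have "eventually (\<lambda>t. Yk h (k+1) t = Lin h t) (at_right (S k))"
    unfolding eventually_at_right_field using ss Lin_eq[of "k+1"]
    by (intro exI[of _ "S (k+1)"]) auto
  ultimately have "(Lin h \<longlongrightarrow> Yk h (k+1) (S k)) (at_right (S k))"
    by (simp add: tendsto_cong)
  then show ?thesis using Yk_start Lin_S[OF assms] by simp
qed

lemma Lin_bdd:
  assumes "PC h" "\<And>t. \<bar>h t\<bar> \<le> B"
  shows "\<bar>Lin h t\<bar> \<le> Xb B + dm * a * Xb B + dm * B + B / a"
proof -
  define k where "k = sidx \<theta> t"
  have tk: "S (k-1) < t" "t \<le> S k" unfolding k_def using sidx by auto
  have B0: "0 \<le> B" using assms(2)[of 0] by linarith
  define x where "x = xs h (k-1)"
  define dl where "dl = del \<theta> (k-1)"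
  have xb: "\<bar>x\<bar> \<le> Xb B" unfolding x_def by (rule xs_bound[OF assms])
  have dl: "0 < dl" "dl \<le> dm" unfolding dl_def using del_pos del_le_dm by auto
  have "\<bar>x + dl * (-a * x + h (S (k-1)))\<bar> \<le> \<bar>x\<bar> + dl * a * \<bar>x\<bar> + dl * \<bar>h (S (k-1))\<bar>"
  proof -
    have e: "x + dl * (-a * x + h (S (k-1))) = (x - dl * a * x) + dl * h (S (k-1))" by (simp add: algebra_simps)
    have "\<bar>x - dl * a * x\<bar> \<le> \<bar>x\<bar> + \<bar>dl * a * x\<bar>" by (rule abs_triangle_ineq4)
    moreover have "\<bar>dl * a * x\<bar> = dl * a * \<bar>x\<bar>" using dl a_pos by (simp add: abs_mult)
    moreover have "\<bar>dl * h (S (k-1))\<bar> = dl * \<bar>h (S (k-1))\<bar>" using dl by (simp add: abs_mult)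
    ultimately show ?thesis unfolding e using abs_triangle_ineq[of "x - dl * a * x" "dl * h (S (k-1))"] by linarith
  qed
  also have "\<dots> \<le> Xb B + dm * a * Xb B + dm * B"
  proof -
    have "dl * a * \<bar>x\<bar> \<le> dm * a * Xb B" using dl a_pos xb by (intro mult_mono) auto
    moreover have "dl * \<bar>h (S (k-1))\<bar> \<le> dm * B" using dl assms(2) B0 by (intro mult_mono) auto
    ultimately show ?thesis using xb by linarith
  qed
  finally have t1: "\<bar>x + dl * (-a * x + h (S (k-1)))\<bar> \<le> Xb B + dm * a * Xb B + dm * B" .
  have e1: "exp (-a*(t - S (k-1))) \<le> 1" using a_pos tk by simp
  have t1': "\<bar>exp (-a*(t - S (k-1))) * (x + dl * (-a * x + h (S (k-1))))\<bar> \<le> Xb B + dm * a * Xb B + dm * B"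
  proof -
    have "\<bar>exp (-a*(t - S (k-1))) * (x + dl * (-a * x + h (S (k-1))))\<bar> = exp (-a*(t - S (k-1))) * \<bar>x + dl * (-a * x + h (S (k-1)))\<bar>"
      by (simp add: abs_mult)
    also have "\<dots> \<le> 1 * (Xb B + dm * a * Xb B + dm * B)" using e1 t1 by (intro mult_mono) auto
    finally show ?thesis by simp
  qed
  have i: "\<bar>integral {S (k-1)..t} (\<lambda>\<tau>. exp (a * \<tau>) * h \<tau>)\<bar> \<le> B * ((exp (a * t) - exp (a * S (k-1))) / a)"
    by (rule int_exp_bound[OF a_pos _ PC_int[OF assms(1)] assms(2)]) (use tk in auto)
  have t2: "\<bar>exp (-a * t) * integral {S (k-1)..t} (\<lambda>\<tau>. exp (a * \<tau>) * h \<tau>)\<bar> \<le> B / a"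
  proof -
    have "\<bar>exp (-a * t) * integral {S (k-1)..t} (\<lambda>\<tau>. exp (a * \<tau>) * h \<tau>)\<bar>
        = exp (-a * t) * \<bar>integral {S (k-1)..t} (\<lambda>\<tau>. exp (a * \<tau>) * h \<tau>)\<bar>" by (simp add: abs_mult)
    also have "\<dots> \<le> exp (-a * t) * (B * ((exp (a * t) - exp (a * S (k-1))) / a))"
      by (rule mult_left_mono[OF i]) simp
    also have "\<dots> = B * ((1 - exp (-a * t) * exp (a * S (k-1))) / a)"
      by (simp add: field_simps exp_minus)
    also have "\<dots> \<le> B * (1 / a)"
      using B0 a_pos by (intro mult_left_mono divide_right_mono) auto
    finally show ?thesis by simp
  qed
  have "Lin h t = exp (-a*(t - S (k-1))) * (x + dl * (-a * x + h (S (k-1))))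
      + exp (-a * t) * integral {S (k-1)..t} (\<lambda>\<tau>. exp (a * \<tau>) * h \<tau>)"
    unfolding Lin_def k_def[symmetric] Yk_def x_def dl_def ..
  then show ?thesis using t1' t2 abs_triangle_ineq[of "exp (-a*(t - S (k-1))) * (x + dl * (-a * x + h (S (k-1))))"
      "exp (-a * t) * integral {S (k-1)..t} (\<lambda>\<tau>. exp (a * \<tau>) * h \<tau>)"] by linarith
qed

definition coefL where "coefL = K / L + real p * dm * K / (1 - r)"

lemma Lin_main:
  assumes "PC h" "\<And>t. \<bar>h t\<bar> \<le> B"
  shows "\<bar>Lin h t\<bar> \<le> coefL * B"
  unfolding coefL_def
  by (rule main_bound[OF Lin_pf[OF assms] assms(2) Lin_bdd[OF assms]])

end

lemma le_geo:
  fixes x y C q :: real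
  assumes "0 \<le> q" "q < 1" "\<And>n. x \<le> y + C * q ^ n"
  shows "x \<le> y"
proof -
  have "(\<lambda>n. y + C * q ^ n) \<longlonglongrightarrow> y + C * 0"
    using assms(1,2) by (intro tendsto_intros) auto
  then show ?thesis
    using tendsto_le[OF trivial_limit_sequentially _ tendsto_const, of "\<lambda>n. y + C * q ^ n" "y + C * 0" x] assms(3)
    by auto
qed

lemma abs_suminf_le:
  fixes f g :: "nat \<Rightarrow> real"
  assumes "summable g" "\<And>n. \<bar>f n\<bar> \<le> g n"
  shows "summable f" "\<bar>suminf f\<bar> \<le> suminf g"
proof -
  show sf: "summable f" by (rule summable_comparison_test'[OF assms(1)]) (use assms(2) in auto)
  have "suminf f \<le> suminf g" using assms sf by (intro suminf_le) (auto simp: abs_le_iff)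
  moreover have "suminf (\<lambda>n. - f n) \<le> suminf g" using assms sf
    by (intro suminf_le summable_minus) (auto simp: abs_le_iff)
  ultimately show "\<bar>suminf f\<bar> \<le> suminf g" by (simp add: suminf_minus[OF sf])
qed

definition tl_lim :: "(nat \<Rightarrow> real) \<Rightarrow> real" where
  "tl_lim g = g 0 + (\<Sum>i. g (Suc i) - g i)"

lemma tl_lim:
  fixes g :: "nat \<Rightarrow> real"
  assumes d: "\<And>n. \<bar>g (Suc n) - g n\<bar> \<le> M * q ^ n" and q: "0 \<le> q" "q < 1"
  shows "\<bar>g n - tl_lim g\<bar> \<le> M * q ^ n / (1 - q)"
proof -
  define dd where "dd i = g (Suc i) - g i" for i
  have sg: "summable (\<lambda>i. M * q ^ i)" using q by (intro summable_mult summable_geometric) auto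
  have sd: "summable dd" using abs_suminf_le(1)[OF sg, of dd] d unfolding dd_def by auto
  have "suminf dd = (\<Sum>i. dd (i + n)) + (\<Sum>i<n. dd i)" by (rule suminf_split_initial_segment[OF sd])
  moreover have "(\<Sum>i<n. dd i) = g n - g 0" unfolding dd_def by (rule sum_lessThan_telescope)
  ultimately have e: "tl_lim g - g n = (\<Sum>i. dd (i + n))" unfolding tl_lim_def dd_def by simp
  have sg2: "summable (\<lambda>i. M * q ^ n * q ^ i)" using q by (intro summable_mult summable_geometric) auto
  have "\<bar>(\<Sum>i. dd (i + n))\<bar> \<le> (\<Sum>i. M * q ^ n * q ^ i)"
  proof (rule abs_suminf_le(2)[OF sg2])
    fix i
    have "\<bar>dd (i + n)\<bar> \<le> M * q ^ (i + n)" unfolding dd_def using d[of "i+n"] by simp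
    also have "\<dots> = M * q ^ n * q ^ i" by (simp add: power_add algebra_simps)
    finally show "\<bar>dd (i + n)\<bar> \<le> M * q ^ n * q ^ i" .
  qed
  also have "\<dots> = M * q ^ n * (1 / (1 - q))" using q by (simp add: suminf_mult suminf_geometric)
  finally show ?thesis using e by (simp add: abs_minus_commute)
qed

lemma tl_lim_cong: "(\<And>n. g n = g' n) \<Longrightarrow> tl_lim g = tl_lim g'"
  by (simp add: tl_lim_def)


locale sys = ts \<theta> p \<omega> for \<theta> p \<omega> +
  fixes m n r :: nat and a :: "cell \<Rightarrow> real" and C :: "cell \<Rightarrow> cell \<Rightarrow> real"
    and f :: "real \<Rightarrow> real" and K :: "cell \<Rightarrow> real" and Mf Lf :: real
    and \<Lambda> :: "vec set" and F :: "vec \<Rightarrow> vec" and \<zeta> :: "int \<Rightarrow> vec"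
  assumes mn: "m \<ge> 1" "n \<ge> 1"
    and apos: "\<forall>c\<in>cells m n. a c > 0"
    and Cnn: "\<forall>c\<in>cells m n. \<forall>d\<in>cells m n. C c d \<ge> 0"
    and fcont: "continuous_on UNIV f"
    and Lcomp: "compact \<Lambda>" and FL: "F ` \<Lambda> \<subseteq> \<Lambda>"
    and lampos: "\<forall>c\<in>cells m n. lam \<theta> p (a c) > 0"
    and Mfpos: "Mf > 0" and fM: "\<forall>x. \<bar>f x\<bar> \<le> Mf"
    and Lfpos: "Lf > 0" and fL: "\<forall>x y. \<bar>f x - f y\<bar> \<le> Lf * \<bar>x - y\<bar>"
    and Kpos: "\<forall>c\<in>cells m n. K c > 0"
    and Kub: "\<forall>c\<in>cells m n. \<forall>s \<tau>. \<tau> \<le> s \<longrightarrow>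
            \<bar>u \<theta> (a c) s \<tau>\<bar> \<le> K c * exp (- lam \<theta> p (a c) * (s - \<tau>))"
    and C5a: "Mf * cbar m n r \<theta> p a C K < 1"
    and C5: "(Mf + H0 m n r \<theta> p a C K Mf \<Lambda> F * Lf) * cbar m n r \<theta> p a C K < 1"
    and zeta: "\<zeta> \<in> Theta \<Lambda> F"
begin

abbreviation CE where "CE \<equiv> cells m n"
abbreviation HH where "HH \<equiv> H0 m n r \<theta> p a C K Mf \<Lambda> F"
abbreviation cb where "cb \<equiv> cbar m n r \<theta> p a C K"
abbreviation qq where "qq \<equiv> (Mf + HH * Lf) * cb"
abbreviation MFv where "MFv \<equiv> MF m n \<Lambda> F"
abbreviation co where "co c \<equiv> coef \<theta> p a K c"
abbreviation cmax where "cmax \<equiv> Max (coef \<theta> p a K ` CE)"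
abbreviation sC where "sC c \<equiv> (\<Sum>d\<in>nbhd m n r c. C c d)"

lemma CE_fin: "finite CE" unfolding cells_def by simp
lemma CE_ne: "CE \<noteq> {}" using mn unfolding cells_def by auto
lemma nb_sub: "nbhd m n r c \<subseteq> CE" unfolding nbhd_def by auto
lemma nb_fin: "finite (nbhd m n r c)" using nb_sub CE_fin finite_subset by blast

lemma lin_c: "c \<in> CE \<Longrightarrow> lin \<theta> p \<omega> (a c) (K c)"
  unfolding lin_def lin_axioms_def using ts_axioms apos lampos Kpos Kub by auto

lemma coefL_eq: assumes "c \<in> CE" shows "lin.coefL \<theta> p (a c) (K c) = co c"
proof -
  interpret lin \<theta> p \<omega> "a c" "K c" by (rule lin_c[OF assms])
  show ?thesis unfolding coefL_def coef_def by simp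
qed

lemma co_nn: assumes "c \<in> CE" shows "0 \<le> co c"
proof -
  interpret lin \<theta> p \<omega> "a c" "K c" by (rule lin_c[OF assms])
  have "0 < 1 - exp (- lam \<theta> p (a c) * P)" using r_lt1 by simp
  then show ?thesis unfolding coef_def using K_pos L_pos dm_pos p1 by (intro add_nonneg_nonneg divide_nonneg_pos) auto
qed

lemma nbC: "d \<in> nbhd m n r c \<Longrightarrow> d \<in> CE" using nb_sub by blast

lemma sC_nn: assumes "c \<in> CE" shows "0 \<le> sC c"
proof (rule sum_nonneg)
  fix d assume "d \<in> nbhd m n r c"
  then have "d \<in> CE" by (rule nbC)
  then show "0 \<le> C c d" using Cnn assms by blast
qed

lemma co_le: "c \<in> CE \<Longrightarrow> co c \<le> cmax"
  using CE_fin by (intro Max_ge) auto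

lemma cmax_nn: "0 \<le> cmax"
proof -
  obtain c where "c \<in> CE" using CE_ne by blast
  then show ?thesis using co_le[of c] co_nn[of c] by linarith
qed

lemma co_sC_le: "c \<in> CE \<Longrightarrow> co c * sC c \<le> cb"
  unfolding cbar_def using CE_fin by (intro Max_ge) auto

lemma cb_nn: "0 \<le> cb"
proof -
  obtain c where "c \<in> CE" using CE_ne by blast
  then show ?thesis using co_sC_le[of c] co_nn[of c] sC_nn[of c] by (smt (verit) mult_nonneg_nonneg)
qed

lemma zeta_in: "\<zeta> k \<in> \<Lambda>" and zeta_step: "\<zeta> (k+1) = F (\<zeta> k)"
  using zeta unfolding Theta_def by auto

lemma Lam_bdd: "\<exists>M. \<forall>c\<in>CE. \<forall>v\<in>\<Lambda>. \<bar>v c\<bar> \<le> M"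
proof -
  have "\<exists>M. \<forall>v\<in>\<Lambda>. \<bar>v c\<bar> \<le> M" for c
  proof -
    have "compact ((\<lambda>v. v c) ` \<Lambda>)"
      by (rule compact_continuous_image[OF continuous_on_subset[OF continuous_on_product_coordinates] Lcomp]) auto
    then have "bounded ((\<lambda>v. v c) ` \<Lambda>)" by (rule compact_imp_bounded)
    then show ?thesis unfolding bounded_real by auto
  qed
  then obtain Mc where Mc: "\<And>c v. v \<in> \<Lambda> \<Longrightarrow> \<bar>v c\<bar> \<le> Mc c" by metis
  show ?thesis
    by (intro exI[of _ "Max (Mc ` CE)"]) (use Mc CE_fin in \<open>force intro: order_trans[OF _ Max_ge]\<close>)
qed

lemma vnorm_ge: "c \<in> CE \<Longrightarrow> \<bar>v c\<bar> \<le> vnorm m n v"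
  unfolding vnorm_def using CE_fin by (intro Max_ge) auto

lemma MF_bdd: "bdd_above ((\<lambda>\<eta>. vnorm m n (F \<eta>)) ` \<Lambda>)"
proof -
  obtain M where M: "\<forall>c\<in>CE. \<forall>v\<in>\<Lambda>. \<bar>v c\<bar> \<le> M" using Lam_bdd by blast
  have "vnorm m n (F \<eta>) \<le> M" if "\<eta> \<in> \<Lambda>" for \<eta>
  proof -
    have "F \<eta> \<in> \<Lambda>" using FL that by auto
    then show ?thesis unfolding vnorm_def using M CE_fin CE_ne by (subst Max_le_iff) auto
  qed
  then show ?thesis by (intro bdd_aboveI2[where M=M]) blast
qed

lemma zeta_bd: "c \<in> CE \<Longrightarrow> \<bar>\<zeta> k c\<bar> \<le> MFv"
proof -
  assume c: "c \<in> CE"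
  have "\<zeta> k = F (\<zeta> (k-1))" using zeta_step[of "k-1"] by simp
  then have "vnorm m n (\<zeta> k) \<le> MFv" unfolding MF_def
    using zeta_in[of "k-1"] by (auto intro!: cSup_upper MF_bdd)
  then show ?thesis using vnorm_ge[OF c, of "\<zeta> k"] by linarith
qed

lemma MFv_nn: "0 \<le> MFv"
proof -
  obtain c where "c \<in> CE" using CE_ne by blast
  then show ?thesis using zeta_bd[of c 0] by linarith
qed

lemma HH_nn: "0 \<le> HH"
  unfolding H0_def using MFv_nn C5a cmax_nn by (intro mult_nonneg_nonneg divide_nonneg_pos) auto

lemma HH_eq: "Mf * cb * HH + cmax * MFv = HH"
proof -
  have "1 - Mf * cb > 0" using C5a by simp
  then show ?thesis unfolding H0_def by (simp add: field_simps)
qed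

lemma qq_nn: "0 \<le> qq" using Mfpos HH_nn Lfpos cb_nn by simp
lemma qq_lt: "qq < 1" using C5 .

definition hN :: "(real \<Rightarrow> vec) \<Rightarrow> cell \<Rightarrow> real \<Rightarrow> real" where
  "hN \<phi> c \<tau> = - (\<Sum>d\<in>nbhd m n r c. C c d * f (\<phi> \<tau> d)) * \<phi> \<tau> c + \<zeta> (sidx \<theta> \<tau>) c"

definition T :: "(real \<Rightarrow> vec) \<Rightarrow> real \<Rightarrow> vec" where
  "T \<phi> = (\<lambda>t c. lin.Lin \<theta> (a c) (hN \<phi> c) t)"

definition XX :: "(real \<Rightarrow> vec) \<Rightarrow> bool" where
  "XX \<phi> \<longleftrightarrow> (\<forall>c\<in>CE. PC (\<lambda>t. \<phi> t c)) \<and> (\<forall>t. \<forall>c\<in>CE. \<bar>\<phi> t c\<bar> \<le> HH)"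

lemma hN_PC:
  assumes "\<forall>d\<in>CE. PC (\<lambda>t. \<phi> t d)" "c \<in> CE"
  shows "PC (hN \<phi> c)"
  unfolding PC_def
proof
  fix k
  have "\<forall>d\<in>CE. \<exists>\<psi>. continuous_on {S (k-1)..S k} \<psi> \<and> (\<forall>t\<in>{S (k-1)<..S k}. \<psi> t = \<phi> t d)"
    using assms(1) unfolding PC_def by blast
  then obtain \<Psi> where \<Psi>: "\<And>d. d \<in> CE \<Longrightarrow> continuous_on {S (k-1)..S k} (\<Psi> d)"
      "\<And>d t. d \<in> CE \<Longrightarrow> t \<in> {S (k-1)<..S k} \<Longrightarrow> \<Psi> d t = \<phi> t d"
    by (metis bchoice)
  define g where "g \<tau> = - (\<Sum>d\<in>nbhd m n r c. C c d * f (\<Psi> d \<tau>)) * \<Psi> c \<tau> + \<zeta> k c" for \<tau>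
  have \<Psi>c: "continuous_on {S (k-1)..S k} (\<Psi> d)" if "d \<in> nbhd m n r c" for d
    using \<Psi>(1) nbC[OF that] by blast
  have "continuous_on {S (k-1)..S k} g" unfolding g_def
    using \<Psi>(1)[OF assms(2)] \<Psi>c
    by (intro continuous_intros continuous_on_compose2[OF fcont]) auto
  moreover have "g t = hN \<phi> c t" if "t \<in> {S (k-1)<..S k}" for t
  proof -
    have "sidx \<theta> t = k" using that by (intro sidx_eq) auto
    moreover have "\<Psi> d t = \<phi> t d" if "d \<in> nbhd m n r c" for d using \<Psi>(2) that nb_sub \<open>t \<in> _\<close> by blast
    ultimately show ?thesis unfolding g_def hN_def using \<Psi>(2)[OF assms(2) that] by simp
  qed
  ultimately show "\<exists>\<psi>. continuous_on {S (k-1)..S k} \<psi> \<and> (\<forall>t\<in>{S (k-1)<..S k}. \<psi> t = hN \<phi> c t)"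
    by blast
qed

lemma sum_f_bd:
  assumes "c \<in> CE"
  shows "\<bar>\<Sum>d\<in>nbhd m n r c. C c d * f (x d)\<bar> \<le> Mf * sC c"
proof -
  have "\<bar>\<Sum>d\<in>nbhd m n r c. C c d * f (x d)\<bar> \<le> (\<Sum>d\<in>nbhd m n r c. \<bar>C c d * f (x d)\<bar>)" by (rule sum_abs)
  also have "\<dots> \<le> (\<Sum>d\<in>nbhd m n r c. C c d * Mf)"
  proof (rule sum_mono)
    fix d assume "d \<in> nbhd m n r c"
    then have "d \<in> CE" by (rule nbC)
    then have "0 \<le> C c d" using Cnn assms by blast
    then show "\<bar>C c d * f (x d)\<bar> \<le> C c d * Mf" using fM by (simp add: abs_mult mult_left_mono)
  qed
  also have "\<dots> = Mf * sC c" by (simp add: sum_distrib_left mult.commute)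
  finally show ?thesis .
qed

lemma hN_bound:
  assumes "\<forall>t. \<forall>d\<in>CE. \<bar>\<phi> t d\<bar> \<le> HH" "c \<in> CE"
  shows "\<bar>hN \<phi> c \<tau>\<bar> \<le> Mf * sC c * HH + MFv"
proof -
  have "\<bar>(\<Sum>d\<in>nbhd m n r c. C c d * f (\<phi> \<tau> d)) * \<phi> \<tau> c\<bar> \<le> (Mf * sC c) * HH"
    unfolding abs_mult using sum_f_bd[OF assms(2)] assms Mfpos sC_nn[OF assms(2)]
    by (intro mult_mono) auto
  then show ?thesis unfolding hN_def using zeta_bd[OF assms(2), of "sidx \<theta> \<tau>"] by linarith
qed

lemma hN_diff:
  assumes "\<forall>t. \<forall>d\<in>CE. \<bar>\<phi> t d\<bar> \<le> HH" "\<forall>t. \<forall>d\<in>CE. \<bar>\<psi> t d\<bar> \<le> HH"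
    "\<forall>t. \<forall>d\<in>CE. \<bar>\<phi> t d - \<psi> t d\<bar> \<le> W" "c \<in> CE"
  shows "\<bar>hN \<phi> c \<tau> - hN \<psi> c \<tau>\<bar> \<le> (Mf + HH * Lf) * sC c * W"
proof -
  define x where "x = \<phi> \<tau>"
  define y where "y = \<psi> \<tau>"
  have xb: "\<bar>x d\<bar> \<le> HH" "\<bar>y d\<bar> \<le> HH" "\<bar>x d - y d\<bar> \<le> W" if "d \<in> CE" for d
    using assms that unfolding x_def y_def by auto
  have ex: "(\<Sum>d\<in>nbhd m n r c. C c d * f (x d)) * x c = (\<Sum>d\<in>nbhd m n r c. C c d * (f (x d) * x c))"
    by (simp add: sum_distrib_right mult.assoc)
  have ey: "(\<Sum>d\<in>nbhd m n r c. C c d * f (y d)) * y c = (\<Sum>d\<in>nbhd m n r c. C c d * (f (y d) * y c))"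
    by (simp add: sum_distrib_right mult.assoc)
  have "hN \<phi> c \<tau> - hN \<psi> c \<tau> = (\<Sum>d\<in>nbhd m n r c. C c d * (f (y d) * y c)) - (\<Sum>d\<in>nbhd m n r c. C c d * (f (x d) * x c))"
    unfolding hN_def x_def[symmetric] y_def[symmetric] using ex ey by simp
  also have "\<dots> = (\<Sum>d\<in>nbhd m n r c. C c d * (f (y d) * y c - f (x d) * x c))"
    by (simp add: sum_subtractf[symmetric] right_diff_distrib)
  also have "\<bar>\<dots>\<bar> \<le> (\<Sum>d\<in>nbhd m n r c. C c d * ((Mf + HH * Lf) * W))"
  proof (rule order_trans[OF sum_abs sum_mono])
    fix d assume d: "d \<in> nbhd m n r c"
    then have dC: "d \<in> CE" by (rule nbC)
    have C0: "0 \<le> C c d" using Cnn assms(4) dC by auto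
    have "f (y d) * y c - f (x d) * x c = f (y d) * (y c - x c) + (f (y d) - f (x d)) * x c"
      by (simp add: algebra_simps)
    moreover have "\<bar>f (y d) * (y c - x c)\<bar> \<le> Mf * W"
      unfolding abs_mult using fM xb[OF assms(4)] Mfpos by (intro mult_mono) (auto simp: abs_minus_commute)
    moreover have "\<bar>(f (y d) - f (x d)) * x c\<bar> \<le> (Lf * W) * HH"
    proof -
      have "\<bar>f (y d) - f (x d)\<bar> \<le> Lf * W"
        using fL[rule_format, of "y d" "x d"] xb(3)[OF dC] Lfpos
        by (smt (verit, best) abs_minus_commute mult_left_mono)
      then show ?thesis unfolding abs_mult using xb(1)[OF assms(4)] Lfpos
        by (intro mult_mono) auto
    qed
    ultimately have "\<bar>f (y d) * y c - f (x d) * x c\<bar> \<le> (Mf + HH * Lf) * W"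
      by (smt (verit) abs_triangle_ineq mult.commute mult.left_commute distrib_right)
    then show "\<bar>C c d * (f (y d) * y c - f (x d) * x c)\<bar> \<le> C c d * ((Mf + HH * Lf) * W)"
      unfolding abs_mult using C0 by (simp add: mult_left_mono)
  qed
  also have "\<dots> = sC c * ((Mf + HH * Lf) * W)" by (simp add: sum_distrib_right)
  also have "\<dots> = (Mf + HH * Lf) * sC c * W" by (simp add: algebra_simps)
  finally show ?thesis .
qed

end

context sys
begin

lemma coef_form: "c \<in> CE \<Longrightarrow> (K c / lam \<theta> p (a c) + real p * delta_max \<theta> p * K c / (1 - exp (- lam \<theta> p (a c) * P))) = co c"
  unfolding coef_def by simp

lemma contr_step:
  assumes c: "c \<in> CE" and pf1: "pf (a c) h1 y1" and pf2: "pf (a c) h2 y2"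
    and hb: "\<And>t. \<bar>h1 t - h2 t\<bar> \<le> (Mf + HH * Lf) * sC c * W"
    and yb: "\<And>t. \<bar>y1 t - y2 t\<bar> \<le> D" and W: "0 \<le> W"
  shows "\<bar>y1 t - y2 t\<bar> \<le> qq * W"
proof -
  have pfd: "pf (a c) (\<lambda>t. h1 t - h2 t) (\<lambda>t. y1 t - y2 t)" by (rule pf_diff[OF pf1 pf2])
  have "\<bar>y1 t - y2 t\<bar> \<le> co c * ((Mf + HH * Lf) * sC c * W)"
    using lin.main_bound[OF lin_c[OF c] pfd hb yb, of t] coef_form[OF c] by simp
  also have "\<dots> = (Mf + HH * Lf) * (co c * sC c) * W" by (simp add: algebra_simps)
  also have "\<dots> \<le> (Mf + HH * Lf) * cb * W"
    using co_sC_le[OF c] Mfpos HH_nn Lfpos W by (intro mult_right_mono mult_left_mono) auto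
  finally show ?thesis by simp
qed

lemma T_X: assumes "XX \<phi>" shows "XX (T \<phi>)"
proof -
  have pc: "\<forall>d\<in>CE. PC (\<lambda>t. \<phi> t d)" and bd: "\<forall>t. \<forall>d\<in>CE. \<bar>\<phi> t d\<bar> \<le> HH" using assms unfolding XX_def by auto
  have "PC (\<lambda>t. T \<phi> t c)" if c: "c \<in> CE" for c
    unfolding T_def using lin.Lin_PC[OF lin_c[OF c] hN_PC[OF pc c]] by simp
  moreover have "\<bar>T \<phi> t c\<bar> \<le> HH" if c: "c \<in> CE" for c t
  proof -
    have "\<bar>T \<phi> t c\<bar> \<le> lin.coefL \<theta> p (a c) (K c) * (Mf * sC c * HH + MFv)"
      unfolding T_def using lin.Lin_main[OF lin_c[OF c] hN_PC[OF pc c] hN_bound[OF bd c]] by simp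
    also have "\<dots> = Mf * HH * (co c * sC c) + co c * MFv" unfolding coefL_eq[OF c] by (simp add: algebra_simps)
    also have "\<dots> \<le> Mf * HH * cb + cmax * MFv"
      using co_sC_le[OF c] co_le[OF c] Mfpos HH_nn MFv_nn
      by (intro add_mono mult_left_mono mult_right_mono) auto
    also have "\<dots> = HH" using HH_eq by (simp add: algebra_simps)
    finally show ?thesis .
  qed
  ultimately show ?thesis unfolding XX_def by auto
qed

lemma T_pf: assumes "XX \<phi>" "c \<in> CE" shows "pf (a c) (hN \<phi> c) (\<lambda>t. T \<phi> t c)"
proof -
  have pc: "\<forall>d\<in>CE. PC (\<lambda>t. \<phi> t d)" and bd: "\<forall>t. \<forall>d\<in>CE. \<bar>\<phi> t d\<bar> \<le> HH" using assms unfolding XX_def by auto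
  show ?thesis unfolding T_def using lin.Lin_pf[OF lin_c[OF assms(2)] hN_PC[OF pc assms(2)] hN_bound[OF bd assms(2)]] by simp
qed

lemma T_contr:
  assumes "XX \<phi>" "XX \<psi>" "\<forall>t. \<forall>c\<in>CE. \<bar>\<phi> t c - \<psi> t c\<bar> \<le> W" "c \<in> CE"
  shows "\<bar>T \<phi> t c - T \<psi> t c\<bar> \<le> qq * W"
proof -
  have bd1: "\<forall>t. \<forall>d\<in>CE. \<bar>\<phi> t d\<bar> \<le> HH" and bd2: "\<forall>t. \<forall>d\<in>CE. \<bar>\<psi> t d\<bar> \<le> HH"
    using assms unfolding XX_def by auto
  have W: "0 \<le> W" using assms(3,4) by (meson abs_ge_zero order_trans)
  have tb: "\<bar>T \<phi> t c\<bar> \<le> HH" "\<bar>T \<psi> t c\<bar> \<le> HH" for t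
    using T_X[OF assms(1)] T_X[OF assms(2)] assms(4) unfolding XX_def by auto
  show ?thesis
  proof (rule contr_step[OF assms(4) T_pf[OF assms(1,4)] T_pf[OF assms(2,4)]])
    show "\<bar>hN \<phi> c t - hN \<psi> c t\<bar> \<le> (Mf + HH * Lf) * sC c * W" for t
      by (rule hN_diff[OF bd1 bd2 assms(3,4)])
    show "\<bar>T \<phi> t c - T \<psi> t c\<bar> \<le> 2 * HH" for t using tb[of t] by linarith
  qed (rule W)
qed

definition phs :: "nat \<Rightarrow> real \<Rightarrow> vec" where "phs N = (T ^^ N) (\<lambda>t c. 0)"

lemma phs_Suc: "phs (Suc N) = T (phs N)" unfolding phs_def by simp

lemma XX_0: "XX (\<lambda>t c. 0)"
  unfolding XX_def PC_def using HH_nn by (auto intro!: exI[of _ "\<lambda>t. 0"])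

lemma phs_X: "XX (phs N)"
  by (induction N) (auto simp: phs_Suc XX_0 T_X phs_def[of 0])

lemma phs_diff: "c \<in> CE \<Longrightarrow> \<bar>phs (Suc N) t c - phs N t c\<bar> \<le> HH * qq ^ N"
proof (induction N arbitrary: t c)
  case 0
  have "\<bar>phs 1 t c\<bar> \<le> HH" using phs_X[of 1] 0 unfolding XX_def by auto
  then show ?case by (simp add: phs_def)
next
  case (Suc N)
  have "\<bar>T (phs (Suc N)) t c - T (phs N) t c\<bar> \<le> qq * (HH * qq ^ N)"
    by (rule T_contr[OF phs_X phs_X _ Suc.prems]) (use Suc.IH in auto)
  then show ?case by (simp add: phs_Suc[of "Suc N"] phs_Suc[of N] algebra_simps)
qed

definition phi_s :: "real \<Rightarrow> vec" where "phi_s t c = tl_lim (\<lambda>N. phs N t c)"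

lemma phs_conv: "c \<in> CE \<Longrightarrow> \<bar>phs N t c - phi_s t c\<bar> \<le> HH * qq ^ N / (1 - qq)"
  unfolding phi_s_def by (rule tl_lim) (use phs_diff qq_nn qq_lt in auto)

lemma phis_X: "XX phi_s"
proof -
  have bd: "\<bar>phi_s t c\<bar> \<le> HH" if c: "c \<in> CE" for t c
  proof (rule le_geo[OF qq_nn qq_lt])
    fix N
    have "\<bar>phs N t c\<bar> \<le> HH" using phs_X[of N] c unfolding XX_def by auto
    then show "\<bar>phi_s t c\<bar> \<le> HH + HH / (1 - qq) * qq ^ N"
      using phs_conv[OF c, of N t] by (simp add: algebra_simps)
  qed
  have pc: "PC (\<lambda>t. phi_s t c)" if c: "c \<in> CE" for c
    unfolding PC_def
  proof
    fix k
    define \<alpha> where "\<alpha> = S (k-1)"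
    define \<beta> where "\<beta> = S k"
    have ab: "\<alpha> < \<beta>" unfolding \<alpha>_def \<beta>_def by (rule S_strict)
    have ex: "\<exists>\<psi>. continuous_on {\<alpha>..\<beta>} \<psi> \<and> (\<forall>t\<in>{\<alpha><..\<beta>}. \<psi> t = phs N t c)" for N
      using phs_X[of N] c unfolding XX_def PC_def \<alpha>_def \<beta>_def by auto
    define ps where "ps N = (SOME \<psi>. continuous_on {\<alpha>..\<beta>} \<psi> \<and> (\<forall>t\<in>{\<alpha><..\<beta>}. \<psi> t = phs N t c))" for N
    have ps: "continuous_on {\<alpha>..\<beta>} (ps N)" "\<And>t. t\<in>{\<alpha><..\<beta>} \<Longrightarrow> ps N t = phs N t c" for N
      using someI_ex[OF ex[of N]] unfolding ps_def by auto
    have psd: "\<bar>ps (Suc N) t - ps N t\<bar> \<le> HH * qq ^ N" if t: "t \<in> {\<alpha>..\<beta>}" for N t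
    proof (cases "t = \<alpha>")
      case False
      then have "t \<in> {\<alpha><..\<beta>}" using t by auto
      then show ?thesis using ps(2) phs_diff[OF c] by simp
    next
      case True
      have "(\<lambda>t. \<bar>ps (Suc N) t - ps N t\<bar>) \<alpha> \<le> (\<lambda>t. HH * qq ^ N) \<alpha>"
      proof (rule cont_le_left[OF ab])
        show "continuous_on {\<alpha>..\<beta>} (\<lambda>t. \<bar>ps (Suc N) t - ps N t\<bar>)"
          using ps(1) by (intro continuous_intros) auto
        show "continuous_on {\<alpha>..\<beta>} (\<lambda>t. HH * qq ^ N)" by (rule continuous_on_const)
        fix t assume "\<alpha> < t" "t \<le> \<beta>"
        then show "\<bar>ps (Suc N) t - ps N t\<bar> \<le> HH * qq ^ N" using ps(2) phs_diff[OF c] by simp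
      qed
      then show ?thesis using True by simp
    qed
    define \<Psi> where "\<Psi> t = tl_lim (\<lambda>N. ps N t)" for t
    have conv: "\<bar>ps N t - \<Psi> t\<bar> \<le> HH * qq ^ N / (1 - qq)" if "t \<in> {\<alpha>..\<beta>}" for N t
      unfolding \<Psi>_def by (rule tl_lim) (use psd that qq_nn qq_lt in auto)
    have ul: "uniform_limit {\<alpha>..\<beta>} ps \<Psi> sequentially"
      unfolding uniform_limit_iff
    proof (intro allI impI)
      fix e :: real assume e: "e > 0"
      have "(\<lambda>N. HH * qq ^ N / (1 - qq)) \<longlonglongrightarrow> HH * 0 / (1 - qq)"
        using qq_nn qq_lt by (intro tendsto_intros) auto
      then have "eventually (\<lambda>N. HH * qq ^ N / (1 - qq) < e) sequentially"
        using e by (intro order_tendstoD(2)) auto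
      then show "eventually (\<lambda>N. \<forall>t\<in>{\<alpha>..\<beta>}. dist (ps N t) (\<Psi> t) < e) sequentially"
      proof (rule eventually_mono)
        fix N assume N: "HH * qq ^ N / (1 - qq) < e"
        show "\<forall>t\<in>{\<alpha>..\<beta>}. dist (ps N t) (\<Psi> t) < e"
        proof
          fix t assume "t \<in> {\<alpha>..\<beta>}"
          then have "\<bar>ps N t - \<Psi> t\<bar> \<le> HH * qq ^ N / (1 - qq)" by (rule conv)
          then show "dist (ps N t) (\<Psi> t) < e" using N by (simp add: dist_real_def)
        qed
      qed
    qed
    have "continuous_on {\<alpha>..\<beta>} \<Psi>"
      by (rule uniform_limit_theorem[OF _ ul]) (use ps(1) in auto)
    moreover have "\<Psi> t = phi_s t c" if "t \<in> {\<alpha><..\<beta>}" for t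
      unfolding \<Psi>_def phi_s_def using ps(2)[OF that] by (intro tl_lim_cong) auto
    ultimately show "\<exists>\<psi>. continuous_on {S (k-1)..S k} \<psi> \<and> (\<forall>t\<in>{S (k-1)<..S k}. \<psi> t = phi_s t c)"
      unfolding \<alpha>_def \<beta>_def by blast
  qed
  show ?thesis unfolding XX_def using bd pc by auto
qed

lemma fixp: assumes c: "c \<in> CE" shows "T phi_s t c = phi_s t c"
proof -
  have "\<bar>T phi_s t c - phi_s t c\<bar> \<le> 0"
  proof (rule le_geo[OF qq_nn qq_lt])
    fix N
    have "\<bar>T phi_s t c - T (phs N) t c\<bar> \<le> qq * (HH * qq ^ N / (1 - qq))"
      by (rule T_contr[OF phis_X phs_X _ c]) (use phs_conv in \<open>auto simp: abs_minus_commute\<close>)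
    moreover have "\<bar>phs (Suc N) t c - phi_s t c\<bar> \<le> HH * qq ^ Suc N / (1 - qq)" by (rule phs_conv[OF c])
    ultimately have "\<bar>T phi_s t c - phi_s t c\<bar> \<le> qq * (HH * qq ^ N / (1 - qq)) + HH * qq ^ Suc N / (1 - qq)"
      unfolding phs_Suc by linarith
    also have "\<dots> = 0 + (2 * HH * qq / (1 - qq)) * qq ^ N" by (simp add: field_simps)
    finally show "\<bar>T phi_s t c - phi_s t c\<bar> \<le> 0 + (2 * HH * qq / (1 - qq)) * qq ^ N" .
  qed
  then show ?thesis by simp
qed

end

context sys
begin

abbreviation Phi where "Phi \<equiv> T phi_s"

lemma hN_eq: assumes c: "c \<in> CE" shows "hN phi_s c = hN Phi c"
proof
  fix \<tau>
  have "(\<Sum>d\<in>nbhd m n r c. C c d * f (phi_s \<tau> d)) = (\<Sum>d\<in>nbhd m n r c. C c d * f (Phi \<tau> d))"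
    using fixp nbC by (intro sum.cong) auto
  then show "hN phi_s c \<tau> = hN Phi c \<tau>" unfolding hN_def using fixp[OF c] by simp
qed

lemma rhs_hN: "sidx \<theta> t = k \<Longrightarrow> rhs m n r a C f (y t) (\<zeta> k) c = - a c * y t c + hN y c t"
  unfolding rhs_def hN_def by (simp add: sum_distrib_right)

lemma Phi_props:
  assumes c: "c \<in> CE"
  shows "\<And>k t. S (k-1) < t \<Longrightarrow> t < S k \<Longrightarrow> ((\<lambda>t. Phi t c) has_real_derivative (- a c * Phi t c + hN Phi c t)) (at t)"
    "\<And>k. ((\<lambda>t. Phi t c) \<longlongrightarrow> Phi (S k) c) (at_left (S k))"
    "\<And>k. ((\<lambda>t. Phi t c) \<longlongrightarrow> Phi (S k) c + del \<theta> k * (- a c * Phi (S k) c + hN Phi c (S k))) (at_right (S k))"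
proof -
  have pc: "\<forall>d\<in>CE. PC (\<lambda>t. phi_s t d)" and bd: "\<forall>t. \<forall>d\<in>CE. \<bar>phi_s t d\<bar> \<le> HH"
    using phis_X unfolding XX_def by auto
  note L = lin_c[OF c] and P = hN_PC[OF pc c] and B = hN_bound[OF bd c]
  fix k t assume "S (k-1) < t" "t < S k"
  from lin.Lin_deriv[OF L P this]
  show "((\<lambda>t. Phi t c) has_real_derivative (- a c * Phi t c + hN Phi c t)) (at t)"
    unfolding T_def hN_eq[OF c] by simp
next
  have pc: "\<forall>d\<in>CE. PC (\<lambda>t. phi_s t d)" and bd: "\<forall>t. \<forall>d\<in>CE. \<bar>phi_s t d\<bar> \<le> HH"
    using phis_X unfolding XX_def by auto
  note L = lin_c[OF c] and P = hN_PC[OF pc c] and B = hN_bound[OF bd c]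
  fix k
  from lin.Lin_lc[OF L P B]
  show "((\<lambda>t. Phi t c) \<longlongrightarrow> Phi (S k) c) (at_left (S k))"
    unfolding T_def by simp
next
  have pc: "\<forall>d\<in>CE. PC (\<lambda>t. phi_s t d)" and bd: "\<forall>t. \<forall>d\<in>CE. \<bar>phi_s t d\<bar> \<le> HH"
    using phis_X unfolding XX_def by auto
  note L = lin_c[OF c] and P = hN_PC[OF pc c] and B = hN_bound[OF bd c]
  fix k
  from lin.Lin_rc[OF L P B, of k]
  show "((\<lambda>t. Phi t c) \<longlongrightarrow> Phi (S k) c + del \<theta> k * (- a c * Phi (S k) c + hN Phi c (S k))) (at_right (S k))"
    unfolding T_def hN_eq[OF c] by simp
qed

lemma Phi_sol: "is_sol m n r \<theta> a C f \<zeta> Phi"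
  unfolding is_sol_def
proof (intro conjI allI ballI)
  fix k t c assume t: "t \<in> {S (k-1)<..<S k}" and c: "c \<in> CE"
  have "sidx \<theta> t = k" using t by (intro sidx_eq) auto
  then show "((\<lambda>t. Phi t c) has_real_derivative rhs m n r a C f (Phi t) (\<zeta> k) c) (at t)"
    using Phi_props(1)[OF c, of k t] t rhs_hN[of t k Phi c] by auto
next
  fix k c assume c: "c \<in> CE"
  show "((\<lambda>t. Phi t c) \<longlongrightarrow> Phi (S k) c) (at_left (S k))" by (rule Phi_props(2)[OF c])
  show "((\<lambda>t. Phi t c) \<longlongrightarrow> Phi (S k) c + del \<theta> k * rhs m n r a C f (Phi (S k)) (\<zeta> k) c) (at_right (S k))"
    using Phi_props(3)[OF c, of k] rhs_hN[OF sidx_S, of Phi k c] by simp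
qed

lemma Phi_bd: "c \<in> CE \<Longrightarrow> \<bar>Phi t c\<bar> \<le> HH"
  using T_X[OF phis_X] unfolding XX_def by auto

lemma Phi_pf: assumes c: "c \<in> CE" shows "pf (a c) (hN Phi c) (\<lambda>t. Phi t c)"
  using T_pf[OF phis_X c] unfolding hN_eq[OF c] .

lemma sol_pf:
  assumes sol: "is_sol m n r \<theta> a C f \<zeta> y" and c: "c \<in> CE"
  shows "pf (a c) (hN y c) (\<lambda>t. y t c)"
proof (rule ode_pf)
  fix k t assume t: "S (k-1) < t" "t < S k"
  have "sidx \<theta> t = k" using t by (intro sidx_eq) auto
  then have e: "rhs m n r a C f (y t) (\<zeta> k) c = - a c * y t c + hN y c t" by (rule rhs_hN)
  have "((\<lambda>t. y t c) has_real_derivative rhs m n r a C f (y t) (\<zeta> k) c) (at t)"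
    using sol c t unfolding is_sol_def by auto
  then show "((\<lambda>t. y t c) has_real_derivative (- a c * y t c + hN y c t)) (at t)"
    unfolding e .
next
  fix k
  show "((\<lambda>t. y t c) \<longlongrightarrow> y (S k) c) (at_left (S k))" using sol c unfolding is_sol_def by auto
  have e: "rhs m n r a C f (y (S k)) (\<zeta> k) c = - a c * y (S k) c + hN y c (S k)"
    by (rule rhs_hN[OF sidx_S])
  have "((\<lambda>t. y t c) \<longlongrightarrow> y (S k) c + del \<theta> k * rhs m n r a C f (y (S k)) (\<zeta> k) c) (at_right (S k))"
    using sol c unfolding is_sol_def by auto
  then show "((\<lambda>t. y t c) \<longlongrightarrow> y (S k) c + del \<theta> k * (- a c * y (S k) c + hN y c (S k))) (at_right (S k))"
    unfolding e .
qed

lemma uniq: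
  assumes sol: "is_sol m n r \<theta> a C f \<zeta> y" and yb: "\<forall>t. \<forall>c\<in>CE. \<bar>y t c\<bar> \<le> HH"
  shows "\<forall>t. \<forall>c\<in>CE. y t c = Phi t c"
proof -
  have Pb: "\<forall>t. \<forall>d\<in>CE. \<bar>Phi t d\<bar> \<le> HH" using Phi_bd by auto
  have b2: "\<bar>y s c - Phi s c\<bar> \<le> 2 * HH" if "c \<in> CE" for s c
  proof -
    have "\<bar>y s c\<bar> \<le> HH" "\<bar>Phi s c\<bar> \<le> HH" using yb Pb that by auto
    then show ?thesis using abs_triangle_ineq4[of "y s c" "Phi s c"] by linarith
  qed
  have it: "\<forall>t. \<forall>c\<in>CE. \<bar>y t c - Phi t c\<bar> \<le> 2 * HH * qq ^ N" for N
  proof (induction N)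
    case 0
    show ?case using b2 by simp
  next
    case (Suc N)
    show ?case
    proof (intro allI ballI)
      fix t c assume c: "c \<in> CE"
      have "\<bar>y t c - Phi t c\<bar> \<le> qq * (2 * HH * qq ^ N)"
      proof (rule contr_step[OF c sol_pf[OF sol c] Phi_pf[OF c]])
        show "\<bar>hN y c s - hN Phi c s\<bar> \<le> (Mf + HH * Lf) * sC c * (2 * HH * qq ^ N)" for s
          by (rule hN_diff[OF yb Pb Suc.IH c])
        show "\<bar>y s c - Phi s c\<bar> \<le> 2 * HH" for s using b2[OF c] .
        show "0 \<le> 2 * HH * qq ^ N" using HH_nn qq_nn by simp
      qed
      then show "\<bar>y t c - Phi t c\<bar> \<le> 2 * HH * qq ^ Suc N" by (simp add: algebra_simps)
    qed
  qed
  show ?thesis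
  proof (intro allI ballI)
    fix t c assume c: "c \<in> CE"
    have "\<bar>y t c - Phi t c\<bar> \<le> 0"
      by (rule le_geo[OF qq_nn qq_lt, of _ 0 "2 * HH"]) (use it c in auto)
    then show "y t c = Phi t c" by simp
  qed
qed

theorem main:
  "\<exists>\<phi>. is_sol m n r \<theta> a C f \<zeta> \<phi>
     \<and> (\<forall>t. \<forall>c\<in>cells m n. \<bar>\<phi> t c\<bar> \<le> H0 m n r \<theta> p a C K Mf \<Lambda> F)
     \<and> (\<forall>y. is_sol m n r \<theta> a C f \<zeta> y
            \<and> (\<forall>t. \<forall>c\<in>cells m n. \<bar>y t c\<bar> \<le> H0 m n r \<theta> p a C K Mf \<Lambda> F)
            \<longrightarrow> (\<forall>t. \<forall>c\<in>cells m n. y t c = \<phi> t c))"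
  using Phi_sol Phi_bd uniq by blast

end

theorem lemma1:
  fixes m n r p :: nat and a :: "cell \<Rightarrow> real" and C :: "cell \<Rightarrow> cell \<Rightarrow> real"
    and f :: "real \<Rightarrow> real" and \<theta> :: "int \<Rightarrow> real" and \<omega> :: real
    and \<Lambda> :: "vec set" and F :: "vec \<Rightarrow> vec" and K :: "cell \<Rightarrow> real" and Mf Lf :: real
  assumes "m \<ge> 1" and "n \<ge> 1"
    and "\<forall>c\<in>cells m n. a c > 0"
    and "\<forall>c\<in>cells m n. \<forall>d\<in>cells m n. C c d \<ge> 0"
    and "continuous_on UNIV f"
    and "strict_mono \<theta>" and "\<theta> (-1) < 0" and "0 < \<theta> 0"
    and "\<omega> > 0" and "p \<ge> 1" and "\<forall>k. \<theta> (k + 2 * int p) = \<theta> k + \<omega>"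
    and "\<Lambda> \<subseteq> {v. \<forall>c. c \<notin> cells m n \<longrightarrow> v c = 0}"
    and "compact \<Lambda>" and "continuous_on \<Lambda> F" and "F ` \<Lambda> \<subseteq> \<Lambda>"
    \<comment> \<open>(C1)\<close>
    and "\<forall>c\<in>cells m n. \<forall>k. del \<theta> k * a c \<noteq> 1"
    \<comment> \<open>(C2)\<close>
    and "\<forall>c\<in>cells m n. lam \<theta> p (a c) > 0"
    \<comment> \<open>(C3)\<close>
    and "Mf > 0" and "\<forall>x. \<bar>f x\<bar> \<le> Mf"
    \<comment> \<open>(C4)\<close>
    and "Lf > 0" and "\<forall>x y. \<bar>f x - f y\<bar> \<le> Lf * \<bar>x - y\<bar>"
    \<comment> \<open>the constants K_ij\<close>
    and "\<forall>c\<in>cells m n. K c > 0"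
    and "\<forall>c\<in>cells m n. \<forall>s \<tau>. \<tau> \<le> s \<longrightarrow>
            \<bar>u \<theta> (a c) s \<tau>\<bar> \<le> K c * exp (- lam \<theta> p (a c) * (s - \<tau>))"
    \<comment> \<open>(C5), including M_f * cbar < 1\<close>
    and "Mf * cbar m n r \<theta> p a C K < 1"
    and "(Mf + H0 m n r \<theta> p a C K Mf \<Lambda> F * Lf) * cbar m n r \<theta> p a C K < 1"
    and "\<zeta> \<in> Theta \<Lambda> F"
  shows "\<exists>\<phi>. is_sol m n r \<theta> a C f \<zeta> \<phi>
            \<and> (\<forall>t. \<forall>c\<in>cells m n. \<bar>\<phi> t c\<bar> \<le> H0 m n r \<theta> p a C K Mf \<Lambda> F)
            \<and> (\<forall>y. is_sol m n r \<theta> a C f \<zeta> y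
                   \<and> (\<forall>t. \<forall>c\<in>cells m n. \<bar>y t c\<bar> \<le> H0 m n r \<theta> p a C K Mf \<Lambda> F)
                   \<longrightarrow> (\<forall>t. \<forall>c\<in>cells m n. y t c = \<phi> t c))"
proof -
  interpret sys \<theta> p \<omega> m n r a C f K Mf Lf \<Lambda> F \<zeta>
    by unfold_locales (use assms in auto)
  show ?thesis by (rule main)
qed

end
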